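(* Let $E$ be a Dedekind complete Riesz space with a weak order unit $e$, and let $(f_n)_{n\in\mathbb{N}_0}$ be an order bounded sequence in the positive cone $E_+$. Then $\frac{1}{n}\sum_{k=0}^{n-1}f_k\to 0$ in order as $n\to\infty$ if and only if there exists a density zero sequence of band projections $(P_n)_{n\in\mathbb{N}_0}$ on $E$ such that $(I-P_n)f_n\to 0$ in order as $n\to\infty$.
   Context: A sequence $(P_n)_{n\in\mathbb{N}_0}$ of band projections on a Riesz space $E$ is said to be of density zero if $\frac{1}{n}\sum_{k=0}^{n-1}P_k\to 0$ in order as $n\to\infty$ (order convergence in the space of order bounded operators on $E$). $I$ denotes the identity operator on $E$. *)

theory Defs
  imports Complex_Main
begin

text \<open>A Riesz space is modelled by a type of class ordered_real_vector that is also a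
lattice; Dedekind completeness (every nonempty order bounded above set has a supremum)
is modelled by the class conditionally_complete_lattice.\<close>

definition rabs :: "'a::{ordered_real_vector,lattice} \<Rightarrow> 'a" where
  "rabs x = sup x (- x)"

definition rdisj :: "'a::{ordered_real_vector,lattice} \<Rightarrow> 'a \<Rightarrow> bool" where
  "rdisj x y \<longleftrightarrow> inf (rabs x) (rabs y) = 0"

definition disj_compl :: "'a::{ordered_real_vector,lattice} set \<Rightarrow> 'a set" where
  "disj_compl B = {x. \<forall>y\<in>B. rdisj x y}"

definition riesz_ideal :: "'a::{ordered_real_vector,lattice} set \<Rightarrow> bool" where
  "riesz_ideal B \<longleftrightarrow> 0 \<in> B \<and> (\<forall>x\<in>B. \<forall>y\<in>B. x + y \<in> B) \<and> (\<forall>c x. x \<in> B \<longrightarrow> c *\<^sub>R x \<in> B)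
     \<and> (\<forall>x y. y \<in> B \<and> rabs x \<le> rabs y \<longrightarrow> x \<in> B)"

definition band :: "'a::{ordered_real_vector,conditionally_complete_lattice} set \<Rightarrow> bool" where
  "band B \<longleftrightarrow> riesz_ideal B \<and> (\<forall>A. A \<subseteq> B \<and> A \<noteq> {} \<and> bdd_above A \<longrightarrow> Sup A \<in> B)"

definition band_projection :: "('a::{ordered_real_vector,conditionally_complete_lattice} \<Rightarrow> 'a) \<Rightarrow> bool" where
  "band_projection P \<longleftrightarrow> (\<exists>B. band B \<and> (\<forall>x. P x \<in> B \<and> x - P x \<in> disj_compl B))"

definition weak_order_unit :: "'a::{ordered_real_vector,lattice} \<Rightarrow> bool" where
  "weak_order_unit e \<longleftrightarrow> 0 \<le> e \<and> (\<forall>x. rdisj x e \<longrightarrow> x = 0)"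

definition order_convergent :: "(nat \<Rightarrow> 'a::{ordered_real_vector,lattice}) \<Rightarrow> 'a \<Rightarrow> bool" where
  "order_convergent x l \<longleftrightarrow> (\<exists>y. decseq y \<and> (\<forall>n. 0 \<le> y n)
      \<and> (\<forall>z. (\<forall>n. z \<le> y n) \<longrightarrow> z \<le> 0) \<and> (\<forall>n. rabs (x n - l) \<le> y n))"

definition order_bounded_op :: "('a::{ordered_real_vector,lattice} \<Rightarrow> 'a) \<Rightarrow> bool" where
  "order_bounded_op T \<longleftrightarrow> linear T \<and>
     (\<forall>a b. \<exists>c d. \<forall>x. a \<le> x \<and> x \<le> b \<longrightarrow> c \<le> T x \<and> T x \<le> d)"

definition op_le :: "('a::{ordered_real_vector,lattice} \<Rightarrow> 'a) \<Rightarrow> ('a \<Rightarrow> 'a) \<Rightarrow> bool" where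
  "op_le T S \<longleftrightarrow> (\<forall>x. 0 \<le> x \<longrightarrow> T x \<le> S x)"

text \<open>Order convergence in L_b(E): there are Y n in L_b(E) decreasing with infimum 0 in L_b(E)
  and -Y n \<le> T n - L \<le> Y n (i.e. |T n - L| \<le> Y n).\<close>
definition op_order_convergent ::
  "(nat \<Rightarrow> 'a::{ordered_real_vector,lattice} \<Rightarrow> 'a) \<Rightarrow> ('a \<Rightarrow> 'a) \<Rightarrow> bool" where
  "op_order_convergent T L \<longleftrightarrow> (\<exists>Y. (\<forall>n. order_bounded_op (Y n))
      \<and> (\<forall>n. op_le (Y (Suc n)) (Y n)) \<and> (\<forall>n. op_le (\<lambda>x. 0) (Y n))
      \<and> (\<forall>S. order_bounded_op S \<and> (\<forall>n. op_le S (Y n)) \<longrightarrow> op_le S (\<lambda>x. 0))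
      \<and> (\<forall>n. op_le (\<lambda>x. T n x - L x) (Y n) \<and> op_le (\<lambda>x. L x - T n x) (Y n)))"

definition density_zero :: "(nat \<Rightarrow> 'a::{ordered_real_vector,lattice} \<Rightarrow> 'a) \<Rightarrow> bool" where
  "density_zero P \<longleftrightarrow> op_order_convergent (\<lambda>n x. (1 / real n) *\<^sub>R (\<Sum>k<n. P k x)) (\<lambda>x. 0)"

end

theory Submission
  imports Defs "HOL-Library.Lattice_Algebras"
begin


definition pos :: "'a::{ordered_real_vector,lattice} \<Rightarrow> 'a" where "pos x = sup x 0"
definition neg :: "'a::{ordered_real_vector,lattice} \<Rightarrow> 'a" where "neg x = sup (- x) 0"

context fixes dummy :: "'a::{ordered_real_vector,conditionally_complete_lattice}" begin
interpretation L: lattice_ab_group_add "(+)" "0::'a" "(-)" uminus "(\<le>)" "(<)" inf sup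
  by unfold_locales

lemma pos_ge0: "0 \<le> pos (x::'a)" by (simp add: pos_def)
lemma neg_ge0: "0 \<le> neg (x::'a)" by (simp add: neg_def)
lemma pos_neg: "pos x - neg x = (x::'a)"
proof -
  have "neg x = - inf x 0" by (simp add: neg_def L.neg_inf_eq_sup)
  then show ?thesis using L.add_eq_inf_sup[of x 0] by (simp add: pos_def)
qed
lemma inf_pos_neg: "inf (pos x) (neg (x::'a)) = 0"
proof -
  have q: "neg x = pos x - x" using pos_neg[of x] by (simp add: algebra_simps)
  have "inf (pos x) (pos x - x) = pos x + inf 0 (- x)"
    using L.add_inf_distrib_left[of "pos x" 0 "-x"] by simp
  also have "inf 0 (-x) = - sup 0 x" by (simp add: L.neg_sup_eq_inf)
  also have "pos x + - sup 0 x = 0" by (metis add.right_inverse pos_def sup_commute)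
  finally show ?thesis using q by simp
qed
lemma disj_add_sup: "inf a b = 0 \<Longrightarrow> a + b = sup a (b::'a)"
  using L.add_eq_inf_sup[of a b] by simp
lemma rabs_ge0: "0 \<le> rabs (x::'a)"
proof -
  have "x + - x \<le> rabs x + rabs x" unfolding rabs_def by (intro add_mono) auto
  then show ?thesis by simp
qed
lemma rabs_pos_neg: "rabs x = pos x + neg (x::'a)"
proof -
  have "pos x + neg x = sup (pos x) (neg x)" using inf_pos_neg disj_add_sup by blast
  also have "\<dots> = sup (rabs x) 0" by (simp add: pos_def neg_def rabs_def sup_assoc sup_left_commute)
  also have "\<dots> = rabs x" using rabs_ge0[of x] by (simp add: sup_absorb1)
  finally show ?thesis by simp
qed
lemma le_rabs: "x \<le> rabs (x::'a)" by (simp add: rabs_def)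
lemma neg_le_rabs: "- x \<le> rabs (x::'a)" by (simp add: rabs_def)
lemma rabs_le_iff: "rabs x \<le> y \<longleftrightarrow> x \<le> y \<and> - x \<le> (y::'a)" by (simp add: rabs_def)
lemma rabs_of_nonneg: "0 \<le> x \<Longrightarrow> rabs x = (x::'a)"
  unfolding rabs_def by (rule sup_absorb1) (meson neg_le_0_iff_le order_trans)
lemma rabs_zero[simp]: "rabs (0::'a) = 0" by (simp add: rabs_def)
lemma rabs_minus[simp]: "rabs (- x) = rabs (x::'a)" by (simp add: rabs_def sup_commute)
lemma rabs_eq0: "rabs x = 0 \<longleftrightarrow> x = (0::'a)"
proof
  assume a: "rabs x = 0"
  have "x \<le> 0" using le_rabs[of x] unfolding a .
  moreover have "- x \<le> 0" using neg_le_rabs[of x] unfolding a .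
  then have "0 \<le> x" by (simp only: neg_le_0_iff_le)
  ultimately show "x = 0" by (rule antisym)
next
  assume "x = 0" then show "rabs x = 0" by (simp only: rabs_zero)
qed
lemma rabs_triangle: "rabs (x + y) \<le> rabs x + rabs (y::'a)"
proof -
  have "x + y \<le> rabs x + rabs y" by (intro add_mono le_rabs)
  moreover have "(- x) + (- y) \<le> rabs x + rabs y" by (intro add_mono neg_le_rabs)
  ultimately show ?thesis unfolding rabs_le_iff by (metis add.commute minus_add)
qed
lemma pos_le_rabs: "pos x \<le> rabs (x::'a)" using rabs_pos_neg[of x] neg_ge0[of x] by simp
lemma neg_le_rabs': "neg x \<le> rabs (x::'a)" using rabs_pos_neg[of x] pos_ge0[of x] by simp

lemma scaleR_sup: "0 \<le> c \<Longrightarrow> c *\<^sub>R sup a b = sup (c *\<^sub>R a) (c *\<^sub>R (b::'a))"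
proof (cases "c = 0")
  case False
  assume c: "0 \<le> c" then have c0: "0 < c" using False by simp
  show ?thesis
  proof (rule antisym)
    have "sup a b \<le> (1/c) *\<^sub>R sup (c *\<^sub>R a) (c *\<^sub>R b)"
    proof (rule sup_least)
      have "a = (1/c) *\<^sub>R (c *\<^sub>R a)" using c0 by simp
      also have "\<dots> \<le> (1/c) *\<^sub>R sup (c *\<^sub>R a) (c *\<^sub>R b)" by (rule scaleR_left_mono) (use c0 in auto)
      finally show "a \<le> (1/c) *\<^sub>R sup (c *\<^sub>R a) (c *\<^sub>R b)" .
      have "b = (1/c) *\<^sub>R (c *\<^sub>R b)" using c0 by simp
      also have "\<dots> \<le> (1/c) *\<^sub>R sup (c *\<^sub>R a) (c *\<^sub>R b)" by (rule scaleR_left_mono) (use c0 in auto)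
      finally show "b \<le> (1/c) *\<^sub>R sup (c *\<^sub>R a) (c *\<^sub>R b)" .
    qed
    then have "c *\<^sub>R sup a b \<le> c *\<^sub>R ((1/c) *\<^sub>R sup (c *\<^sub>R a) (c *\<^sub>R b))"
      by (rule scaleR_left_mono) (use c0 in auto)
    then show "c *\<^sub>R sup a b \<le> sup (c *\<^sub>R a) (c *\<^sub>R b)" using c0 by simp
    show "sup (c *\<^sub>R a) (c *\<^sub>R b) \<le> c *\<^sub>R sup a b"
      by (intro sup_least scaleR_left_mono) (use c in auto)
  qed
qed simp

lemma scaleR_inf: "0 \<le> c \<Longrightarrow> c *\<^sub>R inf a b = inf (c *\<^sub>R a) (c *\<^sub>R (b::'a))"
proof -
  assume c: "0 \<le> c"
  have e: "inf a b = - sup (-a) (-b)" by (rule L.inf_eq_neg_sup)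
  have "c *\<^sub>R inf a b = - (c *\<^sub>R sup (-a) (-b))" by (subst e) (rule scaleR_minus_right)
  also have "\<dots> = - sup (- (c *\<^sub>R a)) (- (c *\<^sub>R b))" using scaleR_sup[OF c, of "-a" "-b"] by simp
  also have "\<dots> = inf (c *\<^sub>R a) (c *\<^sub>R b)" by (rule L.inf_eq_neg_sup[symmetric])
  finally show ?thesis .
qed

lemma rabs_scaleR: "rabs (c *\<^sub>R x) = \<bar>c\<bar> *\<^sub>R rabs (x::'a)"
proof (cases "0 \<le> c")
  case True
  then show ?thesis unfolding rabs_def using scaleR_sup[OF True, of x "-x"] by simp
next
  case False
  then have "c *\<^sub>R x = (-c) *\<^sub>R (-x)" "0 \<le> -c" by auto
  then show ?thesis unfolding rabs_def using scaleR_sup[of "-c" "-x" "x"] False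
    by (simp add: sup_commute)
qed

lemma inf_add_le: "0 \<le> a \<Longrightarrow> 0 \<le> b \<Longrightarrow> 0 \<le> c \<Longrightarrow> inf (a + b) c \<le> inf a c + inf b (c::'a)"
proof -
  assume a: "0 \<le> a" and b: "0 \<le> b" and c: "0 \<le> c"
  have "inf a c + inf b c = inf (a + inf b c) (c + inf b c)" by (rule L.add_inf_distrib_right)
  also have "a + inf b c = inf (a + b) (a + c)" by (rule L.add_inf_distrib_left)
  also have "c + inf b c = inf (c + b) (c + c)" by (rule L.add_inf_distrib_left)
  finally have eq: "inf a c + inf b c = inf (inf (a + b) (a + c)) (inf (c + b) (c + c))" .
  have c1: "c \<le> a + c" "c \<le> c + b" "c \<le> c + c" using a b c by (auto simp: add_increasing add_increasing2)
  have "inf (a + b) c \<le> inf (inf (a + b) (a + c)) (inf (c + b) (c + c))"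
    apply (intro le_infI)
    using c1 by (auto intro: le_infI2 order_trans)
  then show ?thesis using eq by simp
qed

lemma inf_Sup_distrib:
  assumes "A \<noteq> {}" "bdd_above A"
  shows "inf z (Sup A) = Sup (inf z ` (A::'a set))"
proof (rule antisym)
  have bd: "bdd_above (inf z ` A)" by (rule bdd_aboveI[of _ z]) auto
  let ?t = "Sup (inf z ` A)"
  let ?s = "Sup A"
  have "\<forall>a\<in>A. a \<le> ?t + sup (?s - z) 0"
  proof
    fix a assume a: "a \<in> A"
    have "a - inf z a = sup (a - z) 0"
    proof -
      have "a - inf z a = a + sup (-z) (-a)" by (rule L.diff_inf_eq_sup)
      also have "\<dots> = sup (a + -z) (a + -a)" by (rule L.add_sup_distrib_left)
      also have "\<dots> = sup (a - z) 0" by (simp only: add_uminus_conv_diff diff_self)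
      finally show ?thesis .
    qed
    also have "\<dots> \<le> sup (?s - z) 0" by (rule sup_mono[OF diff_right_mono[OF cSup_upper[OF a assms(2)]] order_refl])
    finally have "a \<le> sup (?s - z) 0 + inf z a" by (simp only: diff_le_eq)
    then have "a \<le> inf z a + sup (?s - z) 0" by (metis add.commute)
    then show "a \<le> ?t + sup (?s - z) 0" using add_right_mono[OF cSUP_upper[OF a bd]] by (rule order_trans)
  qed
  then have "?s \<le> ?t + sup (?s - z) 0" using assms(1) by (intro cSup_least) auto
  then have "?s - sup (?s - z) 0 \<le> ?t" by (subst diff_le_eq)
  moreover have "?s - sup (?s - z) 0 = inf z ?s"
  proof -
    have "?s - sup (?s - z) 0 = ?s + inf (- (?s - z)) (- 0)" by (rule L.diff_sup_eq_inf)
    also have "\<dots> = inf (?s + - (?s - z)) (?s + - 0)" by (rule L.add_inf_distrib_left)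
    also have "\<dots> = inf z ?s" by (simp only: minus_diff_eq add_diff_cancel minus_zero add_0_right diff_add_cancel add.commute[of ?s])
    finally show ?thesis .
  qed
  ultimately show "inf z ?s \<le> ?t" by metis
  show "?t \<le> inf z ?s" using assms(1)
  proof (rule cSUP_least)
    fix x assume "x \<in> A"
    then show "inf z x \<le> inf z ?s" by (rule inf_mono[OF order_refl cSup_upper[OF _ assms(2)]])
  qed
qed

lemma pos_Sup:
  assumes "A \<noteq> {}" "bdd_above A"
  shows "pos (Sup A) = Sup (pos ` (A::'a set))"
proof -
  obtain M where M: "\<forall>a\<in>A. a \<le> M" using assms(2) by (auto simp: bdd_above_def)
  have bd: "bdd_above (pos ` A)" by (rule bdd_aboveI[of _ "sup M 0"]) (use M in \<open>auto simp: pos_def intro: sup_mono\<close>)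
  obtain a0 where a0: "a0 \<in> A" using assms by auto
  show ?thesis
  proof (rule antisym)
    show "pos (Sup A) \<le> Sup (pos ` A)" unfolding pos_def[of "Sup A"]
    proof (rule sup_least)
      show "Sup A \<le> Sup (pos ` A)" using assms(1)
      proof (rule cSup_least)
        fix x assume x: "x \<in> A"
        show "x \<le> Sup (pos ` A)" by (rule cSUP_upper2[OF bd x]) (simp add: pos_def)
      qed
      show "0 \<le> Sup (pos ` A)" using cSUP_upper[OF a0 bd] pos_ge0[of a0] by auto
    qed
    show "Sup (pos ` A) \<le> pos (Sup A)" using assms
    proof (intro cSUP_least)
      fix x assume "x \<in> A"
      then have "x \<le> Sup A" using assms(2) by (rule cSup_upper)
      then show "pos x \<le> pos (Sup A)" unfolding pos_def by (rule sup_mono) simp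
    qed
  qed
qed

lemma archimedean:
  assumes "\<forall>n::nat. real n *\<^sub>R p \<le> (x::'a)"
  shows "p \<le> 0"
proof -
  let ?A = "range (\<lambda>n::nat. real n *\<^sub>R p)"
  have bd: "bdd_above ?A" using assms by (auto intro: bdd_aboveI)
  have "\<forall>n::nat. real n *\<^sub>R p \<le> Sup ?A - p"
  proof
    fix n :: nat
    have "real (Suc n) *\<^sub>R p \<in> ?A" by blast
    then have "real (Suc n) *\<^sub>R p \<le> Sup ?A" using bd by (intro cSup_upper)
    then show "real n *\<^sub>R p \<le> Sup ?A - p" by (simp add: algebra_simps)
  qed
  then have "Sup ?A \<le> Sup ?A - p" by (intro cSup_least) auto
  then show ?thesis by simp
qed

lemma archimedean_pos:
  assumes "\<forall>n::nat. real n *\<^sub>R p \<le> (x::'a)" "0 \<le> x"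
  shows "pos p = 0"
proof -
  have "\<forall>n::nat. real n *\<^sub>R pos p \<le> x"
  proof
    fix n
    have "real n *\<^sub>R pos p = sup (real n *\<^sub>R p) 0" unfolding pos_def by (simp add: scaleR_sup)
    also have "\<dots> \<le> x" using assms by auto
    finally show "real n *\<^sub>R pos p \<le> x" .
  qed
  then have "pos p \<le> 0" by (rule archimedean)
  then show ?thesis using pos_ge0[of p] by simp
qed

end



definition bpon :: "'a::{ordered_real_vector,conditionally_complete_lattice} set \<Rightarrow> ('a \<Rightarrow> 'a) \<Rightarrow> bool" where
  "bpon B P \<longleftrightarrow> (\<forall>x. P x \<in> B \<and> x - P x \<in> disj_compl B)"

context fixes dummy :: "'a::{ordered_real_vector,conditionally_complete_lattice}" begin
interpretation L: lattice_ab_group_add "(+)" "0::'a" "(-)" uminus "(\<le>)" "(<)" inf sup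
  by unfold_locales

lemma inf_ge0: "0 \<le> a \<Longrightarrow> 0 \<le> b \<Longrightarrow> 0 \<le> inf a (b::'a)" by (rule le_infI)
lemma rdisj_sym: "rdisj x y \<longleftrightarrow> rdisj y (x::'a)" unfolding rdisj_def by (simp only: inf_commute)
lemma rdisj_I: assumes "inf (rabs x) (rabs y) \<le> 0" shows "rdisj x (y::'a)"
  unfolding rdisj_def using antisym[OF assms inf_ge0[OF rabs_ge0 rabs_ge0, of x y]] .
lemma rdisj_mono: "rabs z \<le> rabs x \<Longrightarrow> rdisj x y \<Longrightarrow> rdisj z (y::'a)"
  unfolding rdisj_def by (metis antisym inf_ge0 inf_mono order_refl rabs_ge0)
lemma rdisj_add: "rdisj x z \<Longrightarrow> rdisj y z \<Longrightarrow> rdisj (x + y) (z::'a)"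
proof (rule rdisj_I)
  assume "rdisj x z" "rdisj y z"
  then have "inf (rabs x) (rabs z) + inf (rabs y) (rabs z) = 0" unfolding rdisj_def by simp
  moreover have "inf (rabs (x + y)) (rabs z) \<le> inf (rabs x + rabs y) (rabs z)"
    by (rule inf_mono[OF rabs_triangle order_refl])
  moreover have "inf (rabs x + rabs y) (rabs z) \<le> inf (rabs x) (rabs z) + inf (rabs y) (rabs z)"
    by (rule inf_add_le[OF rabs_ge0 rabs_ge0 rabs_ge0])
  ultimately show "inf (rabs (x + y)) (rabs z) \<le> 0" by (metis order_trans)
qed
lemma rdisj_scale: "rdisj x y \<Longrightarrow> rdisj (c *\<^sub>R x) (y::'a)"
proof (rule rdisj_I)
  assume d: "rdisj x y"
  define m where "m = max \<bar>c\<bar> 1"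
  have m: "0 \<le> m" "\<bar>c\<bar> \<le> m" "1 \<le> m" unfolding m_def by auto
  have "rabs (c *\<^sub>R x) = \<bar>c\<bar> *\<^sub>R rabs x" by (rule rabs_scaleR)
  also have "\<dots> \<le> m *\<^sub>R rabs x" by (rule scaleR_right_mono[OF m(2) rabs_ge0])
  finally have 1: "rabs (c *\<^sub>R x) \<le> m *\<^sub>R rabs x" .
  have "rabs y = 1 *\<^sub>R rabs y" by simp
  also have "\<dots> \<le> m *\<^sub>R rabs y" by (rule scaleR_right_mono[OF m(3) rabs_ge0])
  finally have 2: "rabs y \<le> m *\<^sub>R rabs y" .
  have "inf (rabs (c *\<^sub>R x)) (rabs y) \<le> inf (m *\<^sub>R rabs x) (m *\<^sub>R rabs y)" by (rule inf_mono[OF 1 2])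
  also have "\<dots> = m *\<^sub>R inf (rabs x) (rabs y)" by (rule scaleR_inf[OF m(1), symmetric])
  also have "\<dots> = 0" using d unfolding rdisj_def by simp
  finally show "inf (rabs (c *\<^sub>R x)) (rabs y) \<le> 0" .
qed
lemma rdisj_self: "rdisj x x \<Longrightarrow> x = (0::'a)"
  unfolding rdisj_def by (simp only: inf_idem rabs_eq0)
lemma rdisj_0: "rdisj 0 (y::'a)"
  unfolding rdisj_def by (simp only: rabs_zero inf_absorb1[OF rabs_ge0])

lemma ideal_diff: "riesz_ideal B \<Longrightarrow> x \<in> B \<Longrightarrow> y \<in> B \<Longrightarrow> x - y \<in> (B::'a set)"
  unfolding riesz_ideal_def by (metis diff_conv_add_uminus scaleR_minus1_left)
lemma ideal_add: "riesz_ideal B \<Longrightarrow> x \<in> B \<Longrightarrow> y \<in> B \<Longrightarrow> x + y \<in> (B::'a set)"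
  unfolding riesz_ideal_def by blast
lemma ideal_scale: "riesz_ideal B \<Longrightarrow> x \<in> B \<Longrightarrow> c *\<^sub>R x \<in> (B::'a set)"
  unfolding riesz_ideal_def by blast
lemma ideal_0: "riesz_ideal B \<Longrightarrow> (0::'a) \<in> B"
  unfolding riesz_ideal_def by blast
lemma ideal_solid: "riesz_ideal B \<Longrightarrow> y \<in> B \<Longrightarrow> rabs x \<le> rabs y \<Longrightarrow> x \<in> (B::'a set)"
  unfolding riesz_ideal_def by blast
lemma ideal_sum: "riesz_ideal B \<Longrightarrow> (\<And>i. i \<in> I \<Longrightarrow> g i \<in> B) \<Longrightarrow> sum g I \<in> (B::'a set)"
proof (induction I rule: infinite_finite_induct)
  case (infinite A) then show ?case by (simp add: ideal_0)
next
  case empty then show ?case by (simp add: ideal_0)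
next
  case (insert x F) then show ?case by (simp add: ideal_add)
qed

lemma ideal_disj_compl: "riesz_ideal (disj_compl (D::'a set))"
  unfolding riesz_ideal_def disj_compl_def
  by (auto intro: rdisj_0 rdisj_add rdisj_scale rdisj_mono)

lemma band_disj_compl: "band (disj_compl (D::'a set))"
  unfolding band_def
proof (intro conjI allI impI ideal_disj_compl)
  fix A :: "'a set" assume A: "A \<subseteq> disj_compl D \<and> A \<noteq> {} \<and> bdd_above A"
  then have sub: "A \<subseteq> disj_compl D" and ne: "A \<noteq> {}" and bd: "bdd_above A" by auto
  obtain a0 where a0: "a0 \<in> A" using ne by auto
  obtain M where M: "\<And>a. a \<in> A \<Longrightarrow> a \<le> M" using bd by (auto simp: bdd_above_def)
  have bdp: "bdd_above (pos ` A)"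
  proof (rule bdd_aboveI[of _ "pos M"])
    fix x assume "x \<in> pos ` A" then obtain a where "a \<in> A" "x = pos a" by auto
    then show "x \<le> pos M" unfolding pos_def using sup_mono[OF M order_refl] by blast
  qed
  let ?s = "Sup A"
  show "?s \<in> disj_compl D" unfolding disj_compl_def
  proof (intro CollectI ballI rdisj_I)
    fix y assume y: "y \<in> D"
    have z: "\<And>a. a \<in> A \<Longrightarrow> inf (rabs a) (rabs y) = 0"
      using sub y unfolding disj_compl_def rdisj_def by blast
    have "inf (rabs y) (pos ?s) = inf (rabs y) (Sup (pos ` A))" by (simp only: pos_Sup[OF ne bd])
    also have "\<dots> = Sup (inf (rabs y) ` pos ` A)" by (rule inf_Sup_distrib[OF _ bdp]) (use ne in blast)
    also have "inf (rabs y) ` pos ` A = {0}"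
    proof -
      have "\<And>a. a \<in> A \<Longrightarrow> inf (rabs y) (pos a) = 0"
      proof -
        fix a assume a: "a \<in> A"
        have "inf (rabs y) (pos a) \<le> inf (rabs a) (rabs y)"
          by (subst inf_commute) (rule inf_mono[OF pos_le_rabs order_refl])
        then show "inf (rabs y) (pos a) = 0" using z[OF a] inf_ge0[OF rabs_ge0 pos_ge0, of y a]
          by (metis antisym)
      qed
      then show ?thesis using ne by (auto simp only: image_iff image_image singleton_iff) (metis ex_in_conv)
    qed
    finally have p: "inf (pos ?s) (rabs y) = 0" by (simp only: inf_commute cSup_singleton)
    have "neg ?s \<le> neg a0" unfolding neg_def
      by (rule sup_mono[OF _ order_refl]) (simp add: cSup_upper[OF a0 bd])
    then have "inf (neg ?s) (rabs y) \<le> inf (rabs a0) (rabs y)"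
      by (rule inf_mono[OF order_trans[OF _ neg_le_rabs'] order_refl])
    then have n: "inf (neg ?s) (rabs y) \<le> 0" using z[OF a0] by simp
    have "inf (rabs ?s) (rabs y) = inf (pos ?s + neg ?s) (rabs y)" by (simp only: rabs_pos_neg)
    also have "\<dots> \<le> inf (pos ?s) (rabs y) + inf (neg ?s) (rabs y)"
      by (rule inf_add_le[OF pos_ge0 neg_ge0 rabs_ge0])
    also have "\<dots> \<le> 0" using p n by simp
    finally show "inf (rabs ?s) (rabs y) \<le> 0" .
  qed
qed

lemma subset_dd: "B \<subseteq> disj_compl (disj_compl (B::'a set))"
  unfolding disj_compl_def using rdisj_sym by blast
lemma disj_compl_anti: "B \<subseteq> C \<Longrightarrow> disj_compl C \<subseteq> disj_compl (B::'a set)"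
  unfolding disj_compl_def by blast
lemma in_both_zero: "x \<in> B \<Longrightarrow> x \<in> disj_compl B \<Longrightarrow> x = (0::'a)"
  unfolding disj_compl_def using rdisj_self by blast
lemma band_ideal: "band B \<Longrightarrow> riesz_ideal (B::'a set)" unfolding band_def by blast
lemma band_inter: assumes B: "band B" and C: "band C" shows "band (B \<inter> (C::'a set))"
proof -
  have iB: "riesz_ideal B" and iC: "riesz_ideal C" using B C by (auto intro: band_ideal)
  have "riesz_ideal (B \<inter> C)" unfolding riesz_ideal_def
  proof (intro conjI allI ballI impI)
    show "0 \<in> B \<inter> C" using ideal_0[OF iB] ideal_0[OF iC] by (rule IntI)
    fix x y assume "x \<in> B \<inter> C" "y \<in> B \<inter> C"
    then show "x + y \<in> B \<inter> C" using ideal_add[OF iB] ideal_add[OF iC] by blast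
  next
    fix c x assume "x \<in> B \<inter> C"
    then show "c *\<^sub>R x \<in> B \<inter> C" using ideal_scale[OF iB] ideal_scale[OF iC] by blast
  next
    fix x y assume "y \<in> B \<inter> C \<and> rabs x \<le> rabs y"
    then show "x \<in> B \<inter> C" using ideal_solid[OF iB] ideal_solid[OF iC] by blast
  qed
  moreover have "\<forall>A. A \<subseteq> B \<inter> C \<and> A \<noteq> {} \<and> bdd_above A \<longrightarrow> Sup A \<in> B \<inter> C"
  proof (intro allI impI)
    fix A assume "A \<subseteq> B \<inter> C \<and> A \<noteq> {} \<and> bdd_above A"
    then have "A \<subseteq> B \<and> A \<noteq> {} \<and> bdd_above A" "A \<subseteq> C \<and> A \<noteq> {} \<and> bdd_above A" by auto
    then show "Sup A \<in> B \<inter> C" using B C unfolding band_def by blast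
  qed
  ultimately show ?thesis unfolding band_def by (rule conjI)
qed

end



context fixes dummy :: "'a::{ordered_real_vector,conditionally_complete_lattice}" begin
interpretation L: lattice_ab_group_add "(+)" "0::'a" "(-)" uminus "(\<le>)" "(<)" inf sup
  by unfold_locales

lemma bpon_in_B: "bpon B P \<Longrightarrow> P x \<in> (B::'a set)" unfolding bpon_def by blast
lemma bpon_in_D: "bpon B P \<Longrightarrow> x - P x \<in> disj_compl (B::'a set)" unfolding bpon_def by blast

lemma bpon_unique:
  assumes B: "band B" and P: "bpon B P" and b: "b \<in> B" and c: "x - b \<in> disj_compl B"
  shows "P x = (b::'a)"
proof -
  have iB: "riesz_ideal B" using B by (rule band_ideal)
  have iD: "riesz_ideal (disj_compl B)" by (rule ideal_disj_compl)
  have "P x - b \<in> B" by (rule ideal_diff[OF iB bpon_in_B[OF P] b])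
  moreover have eq: "P x - b = (x - b) - (x - P x)" by (simp add: algebra_simps)
  have "P x - b \<in> disj_compl B" unfolding eq by (rule ideal_diff[OF iD c bpon_in_D[OF P, of x]])
  ultimately have "P x - b = 0" by (rule in_both_zero)
  then show ?thesis by simp
qed

lemma bpon_add: assumes "band B" "bpon B P" shows "P (x + y) = P x + P (y::'a)"
proof (rule bpon_unique[OF assms])
  have iB: "riesz_ideal B" using assms(1) by (rule band_ideal)
  have iD: "riesz_ideal (disj_compl B)" by (rule ideal_disj_compl)
  show "P x + P y \<in> B" by (rule ideal_add[OF iB bpon_in_B[OF assms(2), of x] bpon_in_B[OF assms(2), of y]])
  have eq: "x + y - (P x + P y) = (x - P x) + (y - P y)" by (simp add: algebra_simps)
  show "x + y - (P x + P y) \<in> disj_compl B"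
    unfolding eq by (rule ideal_add[OF iD bpon_in_D[OF assms(2), of x] bpon_in_D[OF assms(2), of y]])
qed

lemma bpon_scale: assumes "band B" "bpon B P" shows "P (c *\<^sub>R x) = c *\<^sub>R P (x::'a)"
proof (rule bpon_unique[OF assms])
  have iB: "riesz_ideal B" using assms(1) by (rule band_ideal)
  have iD: "riesz_ideal (disj_compl B)" by (rule ideal_disj_compl)
  show "c *\<^sub>R P x \<in> B" by (rule ideal_scale[OF iB bpon_in_B[OF assms(2), of x]])
  have eq: "c *\<^sub>R x - c *\<^sub>R P x = c *\<^sub>R (x - P x)" by (simp add: algebra_simps)
  show "c *\<^sub>R x - c *\<^sub>R P x \<in> disj_compl B"
    unfolding eq by (rule ideal_scale[OF iD bpon_in_D[OF assms(2), of x]])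
qed

lemma bpon_linear: assumes "band B" "bpon B (P::'a\<Rightarrow>'a)" shows "linear P"
  by (rule linearI) (use bpon_add[OF assms] bpon_scale[OF assms] in auto)

lemma bpon_fixB: assumes "band B" "bpon B P" "x \<in> B" shows "P x = (x::'a)"
  by (rule bpon_unique[OF assms]) (simp add: ideal_0[OF ideal_disj_compl])

lemma bpon_fixD: assumes "band B" "bpon B P" "x \<in> disj_compl B" shows "P x = (0::'a)"
  by (rule bpon_unique[OF assms(1,2)]) (use assms(3) ideal_0[OF band_ideal[OF assms(1)]] in auto)

lemma bpon_pos: assumes B: "band B" and P: "bpon B P" and x: "0 \<le> x" shows "0 \<le> P (x::'a)"
proof -
  have iB: "riesz_ideal B" using B by (rule band_ideal)
  define b where "b = P x"
  define c where "c = x - b"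
  have bB: "b \<in> B" unfolding b_def by (rule bpon_in_B[OF P])
  have cD: "c \<in> disj_compl B" unfolding c_def b_def by (rule bpon_in_D[OF P])
  have "- b \<le> c" using x unfolding c_def by (simp add: algebra_simps)
  then have "neg b \<le> pos c" unfolding neg_def pos_def by (rule sup_mono[OF _ order_refl])
  then have nc: "neg b \<le> rabs c" using pos_le_rabs[of c] by (rule order_trans)
  have "rabs (neg b) \<le> rabs b" using neg_le_rabs'[of b] rabs_of_nonneg[OF neg_ge0[of b]] by simp
  then have nB: "neg b \<in> B" by (rule ideal_solid[OF iB bB])
  have "rdisj c (neg b)" using cD nB unfolding disj_compl_def by blast
  then have "inf (rabs (neg b)) (rabs c) = 0" unfolding rdisj_def by (simp only: inf_commute)
  then have "inf (neg b) (rabs c) = 0" by (simp only: rabs_of_nonneg[OF neg_ge0])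
  then have "neg b = 0" using nc by (simp only: inf_absorb1)
  then have "b = pos b" using pos_neg[of b] by simp
  then show ?thesis unfolding b_def using pos_ge0 by metis
qed

lemma bpon_compl: assumes "band B" "bpon B P" shows "bpon (disj_compl B) (\<lambda>x. x - P (x::'a))"
  unfolding bpon_def
proof
  fix x
  show "x - P x \<in> disj_compl B \<and> x - (x - P x) \<in> disj_compl (disj_compl B)"
    using bpon_in_D[OF assms(2)] bpon_in_B[OF assms(2)] subset_dd[of B] by auto
qed

lemma bpon_le: assumes "band B" "bpon B P" "0 \<le> x" shows "P x \<le> (x::'a)"
  using bpon_pos[OF band_disj_compl bpon_compl[OF assms(1,2)] assms(3)] by simp

lemma bpon_mono: assumes "band B" "bpon B P" "x \<le> y" shows "P x \<le> P (y::'a)"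
proof -
  have "0 \<le> P (y - x)" by (rule bpon_pos[OF assms(1,2)]) (use assms(3) in simp)
  moreover have "P (y - x) = P y - P x"
    using bpon_add[OF assms(1,2), of "y - x" x] by simp
  ultimately show ?thesis by simp
qed

lemma bpon_diff: assumes "band B" "bpon B P" shows "P (x - y) = P x - P (y::'a)"
  using bpon_add[OF assms, of "x - y" y] by simp

lemma bpon_rabs: assumes "band B" "bpon B P" shows "rabs (P y) \<le> rabs (y::'a)"
proof -
  have "P y = P (pos y) - P (neg y)" using bpon_diff[OF assms] pos_neg[of y] by metis
  then have "rabs (P y) \<le> rabs (P (pos y)) + rabs (- P (neg y))"
    using rabs_triangle[of "P (pos y)" "- P (neg y)"] by simp
  also have "\<dots> = P (pos y) + P (neg y)"
    using rabs_of_nonneg[OF bpon_pos[OF assms pos_ge0]] rabs_of_nonneg[OF bpon_pos[OF assms neg_ge0]]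
    by simp
  also have "\<dots> \<le> pos y + neg y" by (intro add_mono bpon_le[OF assms] pos_ge0 neg_ge0)
  also have "\<dots> = rabs y" by (simp only: rabs_pos_neg)
  finally show ?thesis .
qed

lemma bpon_ideal: assumes "band B" "bpon B P" "riesz_ideal C" "y \<in> C" shows "P y \<in> (C::'a set)"
  by (rule ideal_solid[OF assms(3,4) bpon_rabs[OF assms(1,2)]])

lemma bpon_comp: assumes B: "band B" and P: "bpon B P" and C: "band C" and Q: "bpon C Q"
  shows "bpon (B \<inter> C) (\<lambda>x. P (Q (x::'a)))"
  unfolding bpon_def
proof
  fix x
  have iD: "riesz_ideal (disj_compl (B \<inter> C))" by (rule ideal_disj_compl)
  have "P (Q x) \<in> C" by (rule bpon_ideal[OF B P band_ideal[OF C] bpon_in_B[OF Q, of x]])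
  then have 1: "P (Q x) \<in> B \<inter> C" using bpon_in_B[OF P, of "Q x"] by blast
  have "x - Q x \<in> disj_compl (B \<inter> C)" using bpon_in_D[OF Q, of x] disj_compl_anti[of "B \<inter> C" C] by blast
  moreover have "Q x - P (Q x) \<in> disj_compl (B \<inter> C)" using bpon_in_D[OF P, of "Q x"] disj_compl_anti[of "B \<inter> C" B] by blast
  ultimately have "(x - Q x) + (Q x - P (Q x)) \<in> disj_compl (B \<inter> C)" by (rule ideal_add[OF iD])
  then show "P (Q x) \<in> B \<inter> C \<and> x - P (Q x) \<in> disj_compl (B \<inter> C)" using 1 by simp
qed

lemma bpon_same: assumes "band B" "bpon B P" "bpon B P'" shows "P x = P' (x::'a)"
  by (rule bpon_unique[OF assms(1,2) bpon_in_B[OF assms(3)] bpon_in_D[OF assms(3)]])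

lemma bpon_commute: assumes B: "band B" and P: "bpon B P" and C: "band C" and Q: "bpon C Q"
  shows "P (Q x) = Q (P (x::'a))"
proof -
  have "bpon (B \<inter> C) (\<lambda>x. P (Q x))" by (rule bpon_comp[OF assms])
  moreover have "bpon (B \<inter> C) (\<lambda>x. Q (P x))" using bpon_comp[OF C Q B P] by (simp only: Int_commute)
  ultimately show ?thesis using bpon_same[OF band_inter[OF B C]] by blast
qed

lemma bpon_weak_unit: assumes B: "band B" and P: "bpon B P" and e: "weak_order_unit e" and Pe: "P e = 0"
  shows "P x = (0::'a)"
proof -
  have "e \<in> disj_compl B" using bpon_in_D[OF P, of e] Pe by simp
  then have "rdisj e (P x)" using bpon_in_B[OF P, of x] unfolding disj_compl_def by blast
  then have "rdisj (P x) e" by (simp only: rdisj_sym)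
  then show ?thesis using e unfolding weak_order_unit_def by blast
qed

end



definition pbp :: "'a::{ordered_real_vector,conditionally_complete_lattice} \<Rightarrow> 'a \<Rightarrow> 'a" where
  "pbp u = (SOME P. bpon (disj_compl (disj_compl {u})) P)"

context fixes dummy :: "'a::{ordered_real_vector,conditionally_complete_lattice}" begin
interpretation L: lattice_ab_group_add "(+)" "0::'a" "(-)" uminus "(\<le>)" "(<)" inf sup
  by unfold_locales

lemma bp_def': "band_projection (P::'a\<Rightarrow>'a) \<longleftrightarrow> (\<exists>B. band B \<and> bpon B P)"
  unfolding band_projection_def bpon_def by simp

lemma bpE: assumes "band_projection (P::'a\<Rightarrow>'a)" obtains B where "band B" "bpon B P"
  using assms unfolding bp_def' by blast

lemma bp_add: "band_projection P \<Longrightarrow> P (x + y) = P x + P (y::'a)"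
  by (metis bpE bpon_add)
lemma bp_scale: "band_projection P \<Longrightarrow> P (c *\<^sub>R x) = c *\<^sub>R P (x::'a)"
  by (metis bpE bpon_scale)
lemma bp_diff: "band_projection P \<Longrightarrow> P (x - y) = P x - P (y::'a)"
  by (metis bpE bpon_diff)
lemma bp_zero_val: "band_projection P \<Longrightarrow> P 0 = (0::'a)"
  using bp_scale[of P 0 0] by simp
lemma bp_minus: "band_projection P \<Longrightarrow> P (- x) = - P (x::'a)"
  using bp_diff[of P 0 x] bp_zero_val[of P] by simp
lemma bp_linear: "band_projection (P::'a\<Rightarrow>'a) \<Longrightarrow> linear P"
  by (metis bpE bpon_linear)
lemma bp_pos: "band_projection P \<Longrightarrow> 0 \<le> x \<Longrightarrow> 0 \<le> P (x::'a)"
  by (metis bpE bpon_pos)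
lemma bp_le: "band_projection P \<Longrightarrow> 0 \<le> x \<Longrightarrow> P x \<le> (x::'a)"
  by (metis bpE bpon_le)
lemma bp_mono: "band_projection P \<Longrightarrow> x \<le> y \<Longrightarrow> P x \<le> P (y::'a)"
  by (metis bpE bpon_mono)
lemma bp_commute: "band_projection P \<Longrightarrow> band_projection Q \<Longrightarrow> P (Q x) = Q (P (x::'a))"
  by (metis bpE bpon_commute)
lemma bp_comp: "band_projection P \<Longrightarrow> band_projection Q \<Longrightarrow> band_projection (\<lambda>x. P (Q (x::'a)))"
  unfolding bp_def' by (metis band_inter bpon_comp)
lemma bp_compl: "band_projection P \<Longrightarrow> band_projection (\<lambda>x. x - P (x::'a))"
  unfolding bp_def' by (metis band_disj_compl bpon_compl)
lemma bp_idem: "band_projection P \<Longrightarrow> P (P x) = P (x::'a)"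
  by (metis bpE bpon_fixB bpon_in_B)
lemma bp_weak_unit: "band_projection P \<Longrightarrow> weak_order_unit e \<Longrightarrow> P e = 0 \<Longrightarrow> P x = (0::'a)"
  by (metis bpE bpon_weak_unit)
lemma bp_sum: "band_projection P \<Longrightarrow> P (sum g I) = (\<Sum>i\<in>I. P (g i :: 'a))"
proof (induction I rule: infinite_finite_induct)
  case (infinite A) then show ?case by (simp add: bp_zero_val)
next
  case empty then show ?case by (simp add: bp_zero_val)
next
  case (insert x F) then show ?case by (simp add: bp_add)
qed

lemma bp_zero: "band_projection (\<lambda>x::'a. 0)"
  unfolding bp_def'
proof (intro exI conjI)
  show "band (disj_compl (UNIV::'a set))" by (rule band_disj_compl)
  show "bpon (disj_compl UNIV) (\<lambda>x::'a. 0)" unfolding bpon_def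
  proof (intro allI conjI)
    fix x :: 'a
    show "(0::'a) \<in> disj_compl UNIV" by (rule ideal_0[OF ideal_disj_compl])
    have "\<And>y. y \<in> disj_compl (UNIV::'a set) \<Longrightarrow> y = 0"
      unfolding disj_compl_def using rdisj_self by blast
    then show "x - 0 \<in> disj_compl (disj_compl UNIV)"
      unfolding disj_compl_def using rdisj_0 rdisj_sym by fastforce
  qed
qed

lemma bp_id: "band_projection (\<lambda>x::'a. x)"
  unfolding bp_def'
proof (intro exI conjI)
  show "band (disj_compl {0::'a})" by (rule band_disj_compl)
  show "bpon (disj_compl {0}) (\<lambda>x::'a. x)" unfolding bpon_def
  proof (intro allI conjI)
    fix x :: 'a
    show "x \<in> disj_compl {0::'a}" unfolding disj_compl_def using rdisj_0 rdisj_sym by blast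
    show "x - x \<in> disj_compl (disj_compl {0::'a})" by (simp add: ideal_0[OF ideal_disj_compl])
  qed
qed

lemma core_sup:
  assumes x: "0 \<le> x" and u: "0 \<le> u"
  defines "s \<equiv> Sup (range (\<lambda>k::nat. inf x (real k *\<^sub>R u)))"
  shows "inf (x - s) u = (0::'a)" "s \<le> x" "0 \<le> s"
proof -
  let ?g = "\<lambda>k::nat. inf x (real k *\<^sub>R u)"
  have bd: "bdd_above (range ?g)" by (rule bdd_aboveI[of _ x]) auto
  have up: "\<And>k. ?g k \<le> s" unfolding s_def using bd by (intro cSup_upper) auto
  show sx: "s \<le> x" unfolding s_def by (rule cSup_least) auto
  have "?g 0 = 0" using x by (simp add: inf_absorb2)
  then show "0 \<le> s" using up[of 0] by simp
  define d where "d = inf (x - s) u"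
  have d0: "0 \<le> d" unfolding d_def by (rule inf_ge0) (use sx u in simp_all)
  have "\<And>k. ?g k + d \<le> s"
  proof -
    fix k
    have "?g k + d \<le> x"
    proof -
      have "?g k + d \<le> s + (x - s)" by (rule add_mono[OF up]) (simp add: d_def)
      then show ?thesis by simp
    qed
    moreover have "?g k + d \<le> real (Suc k) *\<^sub>R u"
    proof -
      have "?g k + d \<le> real k *\<^sub>R u + u" by (rule add_mono) (simp_all add: d_def)
      then show ?thesis by (simp add: algebra_simps)
    qed
    ultimately have "?g k + d \<le> ?g (Suc k)" by (rule le_infI)
    then show "?g k + d \<le> s" using up[of "Suc k"] by (rule order_trans)
  qed
  then have "\<And>k. ?g k \<le> s - d" by (simp add: le_diff_eq)
  then have "s \<le> s - d" unfolding s_def by (intro cSup_least) auto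
  then have "d \<le> 0" by simp
  then show "inf (x - s) u = 0" using d0 unfolding d_def by (rule antisym)
qed

lemma pbp_exists: assumes u: "0 \<le> (u::'a)" shows "\<exists>P. bpon (disj_compl (disj_compl {u})) P"
proof -
  let ?B = "disj_compl (disj_compl {u})"
  let ?D = "disj_compl {u}"
  have iB: "riesz_ideal ?B" and iD: "riesz_ideal (disj_compl ?B)" by (rule ideal_disj_compl)+
  have bB: "band ?B" by (rule band_disj_compl)
  have uB: "u \<in> ?B" using subset_dd[of "{u}"] by blast
  define \<Phi> where "\<Phi> x = Sup (range (\<lambda>k::nat. inf x (real k *\<^sub>R u)))" for x
  have \<Phi>B: "\<Phi> x \<in> ?B" if x: "0 \<le> x" for x
  proof -
    have "\<forall>A. A \<subseteq> ?B \<and> A \<noteq> {} \<and> bdd_above A \<longrightarrow> Sup A \<in> ?B" using bB unfolding band_def by blast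
    moreover have "range (\<lambda>k::nat. inf x (real k *\<^sub>R u)) \<subseteq> ?B"
    proof
      fix y assume "y \<in> range (\<lambda>k::nat. inf x (real k *\<^sub>R u))"
      then obtain k :: nat where y: "y = inf x (real k *\<^sub>R u)" by auto
      have ku: "real k *\<^sub>R u \<in> ?B" by (rule ideal_scale[OF iB uB])
      have "0 \<le> y" unfolding y by (rule inf_ge0[OF x]) (rule scaleR_nonneg_nonneg[OF of_nat_0_le_iff u])
      then have "rabs y \<le> rabs (real k *\<^sub>R u)" unfolding y
        using rabs_of_nonneg scaleR_nonneg_nonneg[OF of_nat_0_le_iff u] by (metis inf_le2)
      then show "y \<in> ?B" by (rule ideal_solid[OF iB ku])
    qed
    moreover have "bdd_above (range (\<lambda>k::nat. inf x (real k *\<^sub>R u)))" by (rule bdd_aboveI[of _ x]) auto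
    ultimately show ?thesis unfolding \<Phi>_def by blast
  qed
  have \<Phi>D: "x - \<Phi> x \<in> disj_compl ?B" if x: "0 \<le> x" for x
  proof -
    have c: "inf (x - \<Phi> x) u = 0" "\<Phi> x \<le> x" unfolding \<Phi>_def using core_sup[OF x u] by auto
    have "rdisj (x - \<Phi> x) u" unfolding rdisj_def
      using c rabs_of_nonneg[OF u] rabs_of_nonneg[of "x - \<Phi> x"] by simp
    then have "x - \<Phi> x \<in> ?D" unfolding disj_compl_def by simp
    then show ?thesis unfolding disj_compl_def[of ?B] using rdisj_sym unfolding disj_compl_def by blast
  qed
  define P where "P x = \<Phi> (pos x) - \<Phi> (neg x)" for x
  have "bpon ?B P" unfolding bpon_def
  proof (intro allI conjI)
    fix x
    show "P x \<in> ?B" unfolding P_def by (rule ideal_diff[OF iB \<Phi>B[OF pos_ge0] \<Phi>B[OF neg_ge0]])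
    have eq: "x - P x = (pos x - \<Phi> (pos x)) - (neg x - \<Phi> (neg x))"
      unfolding P_def using pos_neg[of x] by (simp add: algebra_simps)
    show "x - P x \<in> disj_compl ?B" unfolding eq by (rule ideal_diff[OF iD \<Phi>D[OF pos_ge0] \<Phi>D[OF neg_ge0]])
  qed
  then show ?thesis by blast
qed

lemma pbp_bpon: assumes "0 \<le> (u::'a)" shows "bpon (disj_compl (disj_compl {u})) (pbp u)"
  unfolding pbp_def using pbp_exists[OF assms] by (rule someI_ex)

lemma pbp_bp: "0 \<le> (u::'a) \<Longrightarrow> band_projection (pbp u)"
  unfolding bp_def' using pbp_bpon band_disj_compl by blast

lemma pbp_pos_part: "pbp (pos v) v = pos (v::'a)"
proof -
  let ?B = "disj_compl (disj_compl {pos v})"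
  have P: "bpon ?B (pbp (pos v))" by (rule pbp_bpon[OF pos_ge0])
  show ?thesis
  proof (rule bpon_unique[OF band_disj_compl P])
    show "pos v \<in> ?B" using subset_dd[of "{pos v}"] by blast
    have "rdisj (- neg v) (pos v)" unfolding rdisj_def
      using inf_pos_neg[of v] rabs_of_nonneg[OF pos_ge0, of v] rabs_of_nonneg[OF neg_ge0, of v]
      by (simp add: inf_commute)
    then have "- neg v \<in> disj_compl {pos v}" unfolding disj_compl_def by simp
    moreover have "v - pos v = - neg v" using pos_neg[of v] by (simp add: algebra_simps)
    ultimately have nD: "v - pos v \<in> disj_compl {pos v}" by simp
    show "v - pos v \<in> disj_compl ?B" unfolding disj_compl_def[of ?B]
    proof (intro CollectI ballI)
      fix y assume "y \<in> ?B"
      then have "rdisj y (v - pos v)" using nD unfolding disj_compl_def[of "disj_compl {pos v}"] by blast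
      then show "rdisj (v - pos v) y" by (simp only: rdisj_sym)
    qed
  qed
qed

lemma pbp_nested: assumes v: "0 \<le> v" and vu: "v \<le> (u::'a)"
  shows "pbp u (pbp v x) = pbp v x"
proof -
  have u: "0 \<le> u" using v vu by simp
  have "disj_compl {u} \<subseteq> disj_compl {v}"
  proof
    fix z assume "z \<in> disj_compl {u}"
    then have "rdisj u z" unfolding disj_compl_def using rdisj_sym by blast
    moreover have "rabs v \<le> rabs u" using rabs_of_nonneg[OF v] rabs_of_nonneg[OF u] vu by simp
    ultimately have "rdisj v z" by (rule rdisj_mono[rotated])
    then show "z \<in> disj_compl {v}" unfolding disj_compl_def using rdisj_sym by blast
  qed
  then have sub: "disj_compl (disj_compl {v}) \<subseteq> disj_compl (disj_compl {u})" by (rule disj_compl_anti)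
  have "pbp v x \<in> disj_compl (disj_compl {v})" by (rule bpon_in_B[OF pbp_bpon[OF v]])
  then show ?thesis using bpon_fixB[OF band_disj_compl pbp_bpon[OF u]] sub by blast
qed

lemma weak_unit_sup:
  assumes e: "weak_order_unit e" and x: "0 \<le> x"
  shows "Sup (range (\<lambda>k::nat. inf x (real k *\<^sub>R e))) = (x::'a)"
proof -
  let ?s = "Sup (range (\<lambda>k::nat. inf x (real k *\<^sub>R e)))"
  have e0: "0 \<le> e" using e unfolding weak_order_unit_def by simp
  have c: "inf (x - ?s) e = 0" "?s \<le> x" using core_sup[OF x e0] by auto
  have "rdisj (x - ?s) e" unfolding rdisj_def
    using c rabs_of_nonneg[OF e0] rabs_of_nonneg[of "x - ?s"] by simp
  then have "x - ?s = 0" using e unfolding weak_order_unit_def by blast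
  then show ?thesis by simp
qed

end



definition nulldec :: "(nat \<Rightarrow> 'a::{ordered_real_vector,conditionally_complete_lattice}) \<Rightarrow> bool" where
  "nulldec y \<longleftrightarrow> decseq y \<and> (\<forall>n. 0 \<le> y n) \<and> (\<forall>z. (\<forall>n. z \<le> y n) \<longrightarrow> z \<le> 0)"

context fixes dummy :: "'a::{ordered_real_vector,conditionally_complete_lattice}" begin
interpretation L: lattice_ab_group_add "(+)" "0::'a" "(-)" uminus "(\<le>)" "(<)" inf sup
  by unfold_locales

lemma order_convergent_iff: "order_convergent x (l::'a) \<longleftrightarrow> (\<exists>y. nulldec y \<and> (\<forall>n. rabs (x n - l) \<le> y n))"
  unfolding order_convergent_def nulldec_def by blast

lemma nulldec_tail:
  assumes y: "nulldec (y::nat\<Rightarrow>'a)" and z: "\<And>n. n \<ge> J \<Longrightarrow> z \<le> y n"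
  shows "z \<le> 0"
proof -
  have "\<forall>n. z \<le> y n"
  proof
    fix n
    show "z \<le> y n"
    proof (cases "n \<ge> J")
      case True then show ?thesis using z by blast
    next
      case False
      then have "y J \<le> y n" using y unfolding nulldec_def by (auto intro: decseqD)
      then show ?thesis using z[of J] by simp
    qed
  qed
  then show ?thesis using y unfolding nulldec_def by blast
qed

lemma nulldec_scaled:
  assumes y: "nulldec (y::nat\<Rightarrow>'a)" and c: "0 \<le> c" and z: "\<And>n. n \<ge> J \<Longrightarrow> z \<le> c *\<^sub>R y n"
  shows "z \<le> 0"
proof (cases "c = 0")
  case True then show ?thesis using z[of J] by simp
next
  case False
  then have c0: "0 < c" using c by simp
  have "(1/c) *\<^sub>R z \<le> 0"
  proof (rule nulldec_tail[OF y])
    fix n assume "n \<ge> J"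
    then have "(1/c) *\<^sub>R z \<le> (1/c) *\<^sub>R (c *\<^sub>R y n)" using z c0 by (intro scaleR_left_mono) auto
    then show "(1/c) *\<^sub>R z \<le> y n" using c0 by simp
  qed
  then have "c *\<^sub>R ((1/c) *\<^sub>R z) \<le> 0" by (rule scaleR_nonneg_nonpos[OF c])
  then show ?thesis using c0 by simp
qed

lemma nulldec_add:
  assumes u: "nulldec (u::nat\<Rightarrow>'a)" and v: "nulldec v"
  shows "nulldec (\<lambda>n. u n + v n)"
  unfolding nulldec_def
proof (intro conjI allI impI)
  show "decseq (\<lambda>n. u n + v n)" using u v unfolding nulldec_def decseq_def by (auto intro: add_mono)
  fix n show "0 \<le> u n + v n" using u v unfolding nulldec_def by (auto intro: add_nonneg_nonneg)
next
  fix z assume z: "\<forall>n. z \<le> u n + v n"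
  have "\<forall>m. z \<le> v m"
  proof
    fix m
    have "z - v m \<le> 0"
    proof (rule nulldec_tail[OF u, of m])
      fix n assume "n \<ge> m"
      then have "v n \<le> v m" using v unfolding nulldec_def by (auto intro: decseqD)
      then have "z \<le> u n + v m" using z[rule_format, of n] by (metis add_left_mono order_trans)
      then show "z - v m \<le> u n" by (simp add: diff_le_eq)
    qed
    then show "z \<le> v m" by simp
  qed
  then show "z \<le> 0" using v unfolding nulldec_def by blast
qed

lemma archimedean_geom:
  assumes x: "0 \<le> x" and w: "\<And>J::nat. w \<le> (1/2)^J *\<^sub>R (x::'a)"
  shows "w \<le> 0"
proof -
  have "\<forall>J::nat. real J *\<^sub>R pos w \<le> x"
  proof
    fix J :: nat
    have pw: "pos w \<le> (1/2)^J *\<^sub>R x" unfolding pos_def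
      by (rule sup_least[OF w]) (rule scaleR_nonneg_nonneg[OF _ x], simp)
    have "real J \<le> 2^J" by (metis of_nat_less_two_power less_imp_le of_nat_numeral of_nat_power)
    then have "real J *\<^sub>R pos w \<le> 2^J *\<^sub>R pos w" by (rule scaleR_right_mono[OF _ pos_ge0])
    also have "\<dots> \<le> 2^J *\<^sub>R ((1/2)^J *\<^sub>R x)" by (rule scaleR_left_mono[OF pw]) simp
    also have "\<dots> = x" by (simp add: power_one_over)
    finally show "real J *\<^sub>R pos w \<le> x" .
  qed
  then have "pos w \<le> 0" by (rule archimedean)
  then show ?thesis unfolding pos_def by (metis sup_ge1 order_trans)
qed

lemma etest:
  fixes m :: nat and R :: "nat \<Rightarrow> 'a \<Rightarrow> 'a" and c :: "nat \<Rightarrow> real"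
  assumes e: "weak_order_unit (e::'a)" and x: "0 \<le> x"
  shows "\<And>A c0. band_projection A \<Longrightarrow> (\<forall>i<m. band_projection (R i)) \<Longrightarrow>
     0 \<le> A (c0 *\<^sub>R e + (\<Sum>i<m. c i *\<^sub>R R i e)) \<Longrightarrow> 0 \<le> A (c0 *\<^sub>R x + (\<Sum>i<m. c i *\<^sub>R R i x))"
proof (induction m)
  case 0
  note A = 0(1)
  have e0: "0 \<le> e" using e unfolding weak_order_unit_def by simp
  have h: "0 \<le> c0 *\<^sub>R A e" using 0(3) bp_scale[OF A] by simp
  show ?case
  proof (cases "0 \<le> c0")
    case True
    then show ?thesis using bp_scale[OF A] bp_pos[OF A x] by (simp add: scaleR_nonneg_nonneg)
  next
    case False
    then have "A e = (1/c0) *\<^sub>R (c0 *\<^sub>R A e)" by simp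
    also have "\<dots> \<le> 0" by (rule scaleR_nonpos_nonneg[OF _ h]) (use False in simp)
    finally have "A e = 0" using bp_pos[OF A e0] by (simp add: antisym)
    then have "A (c0 *\<^sub>R x) = 0" using bp_weak_unit[OF A e] by blast
    then show ?thesis by simp
  qed
next
  case (Suc m)
  note A = Suc.prems(1)
  have R: "\<And>i. i < Suc m \<Longrightarrow> band_projection (R i)" using Suc.prems(2) by blast
  let ?R = "R m"
  have Rm: "band_projection ?R" using R by blast
  define S where "S z = c0 *\<^sub>R z + (\<Sum>i<m. c i *\<^sub>R R i z)" for z
  define F where "F z = c0 *\<^sub>R z + (\<Sum>i<Suc m. c i *\<^sub>R R i z)" for z
  have FS: "F z = S z + c m *\<^sub>R ?R z" for z unfolding F_def S_def by (simp add: algebra_simps)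
  have id1: "?R (F z) = ?R ((c0 + c m) *\<^sub>R z + (\<Sum>i<m. c i *\<^sub>R R i z))" for z
    unfolding FS S_def using bp_idem[OF Rm] by (simp add: bp_add[OF Rm] bp_scale[OF Rm] bp_sum[OF Rm] scaleR_add_left algebra_simps)
  have id2: "F z - ?R (F z) = S z - ?R (S z)" for z
    unfolding FS using bp_idem[OF Rm] by (simp add: bp_add[OF Rm] bp_scale[OF Rm])
  have A1: "band_projection (\<lambda>z. A (?R z))" by (rule bp_comp[OF A Rm])
  have A2: "band_projection (\<lambda>z. A (z - ?R z))" by (rule bp_comp[OF A bp_compl[OF Rm]])
  have Fe: "0 \<le> A (F e)" using Suc.prems(3) unfolding F_def .
  have "0 \<le> A (?R ((c0 + c m) *\<^sub>R e + (\<Sum>i<m. c i *\<^sub>R R i e)))"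
  proof -
    have "0 \<le> ?R (A (F e))" by (rule bp_pos[OF Rm Fe])
    then show ?thesis using bp_commute[OF A Rm] id1 by metis
  qed
  then have 1: "0 \<le> A (?R ((c0 + c m) *\<^sub>R x + (\<Sum>i<m. c i *\<^sub>R R i x)))"
    using Suc.IH[OF A1] R by simp
  have "0 \<le> A (S e - ?R (S e))"
  proof -
    have "0 \<le> A (F e) - ?R (A (F e))" using bp_le[OF Rm Fe] by simp
    also have "A (F e) - ?R (A (F e)) = A (F e - ?R (F e))" using bp_diff[OF A] bp_commute[OF A Rm] by metis
    finally show ?thesis using id2 by metis
  qed
  then have 2: "0 \<le> A (S x - ?R (S x))" using Suc.IH[OF A2] R unfolding S_def by simp
  have "A (F x) = A (?R (F x)) + A (F x - ?R (F x))" using bp_add[OF A, symmetric] by simp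
  also have "\<dots> = A (?R ((c0 + c m) *\<^sub>R x + (\<Sum>i<m. c i *\<^sub>R R i x))) + A (S x - ?R (S x))"
    using id1 id2 by metis
  finally have "A (F x) \<ge> 0" using 1 2 by (metis add_nonneg_nonneg)
  then show ?case unfolding F_def .
qed

end



context fixes dummy :: "'a::{ordered_real_vector,conditionally_complete_lattice}" begin
interpretation L: lattice_ab_group_add "(+)" "0::'a" "(-)" uminus "(\<le>)" "(<)" inf sup
  by unfold_locales

lemma inf_seq_add:
  fixes a b :: "nat \<Rightarrow> 'a"
  assumes ad: "\<And>n. a (Suc n) \<le> a n" and bd: "\<And>n. b (Suc n) \<le> b n"
    and a0: "\<And>n. 0 \<le> a n" and b0: "\<And>n. 0 \<le> b n"
  shows "Inf (range (\<lambda>n. a n + b n)) = Inf (range a) + Inf (range b)"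
proof (rule antisym)
  have bla: "bdd_below (range a)" using a0 by (intro bdd_belowI) auto
  have blb: "bdd_below (range b)" using b0 by (intro bdd_belowI) auto
  have blab: "bdd_below (range (\<lambda>n. a n + b n))" using a0 b0 by (intro bdd_belowI) (auto intro: add_nonneg_nonneg)
  have da: "decseq a" by (rule decseq_SucI) (rule ad)
  have db: "decseq b" by (rule decseq_SucI) (rule bd)
  let ?I = "Inf (range (\<lambda>n. a n + b n))"
  have "\<And>n. ?I - b n \<le> Inf (range a)"
  proof -
    fix n
    show "?I - b n \<le> Inf (range a)"
    proof (rule cINF_greatest)
      fix m
      have "?I \<le> a (max m n) + b (max m n)" by (rule cINF_lower[OF blab]) simp
      also have "\<dots> \<le> a m + b n" by (rule add_mono; rule decseqD[OF da] decseqD[OF db]) auto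
      finally show "?I - b n \<le> a m" by (simp add: diff_le_eq)
    qed simp
  qed
  then have "\<And>n. ?I - Inf (range a) \<le> b n" by (simp add: diff_le_eq add.commute le_diff_eq)
  then have "?I - Inf (range a) \<le> Inf (range b)" by (intro cINF_greatest) auto
  then show "?I \<le> Inf (range a) + Inf (range b)" by (simp add: diff_le_eq add.commute)
  show "Inf (range a) + Inf (range b) \<le> ?I"
    by (rule cINF_greatest) (auto intro!: add_mono cINF_lower bla blb)
qed

lemma inf_seq_scale:
  fixes a :: "nat \<Rightarrow> 'a"
  assumes c: "0 \<le> c" and a0: "\<And>n. 0 \<le> a n"
  shows "Inf (range (\<lambda>n. c *\<^sub>R a n)) = c *\<^sub>R Inf (range a)"
proof (cases "c = 0")
  case True then show ?thesis by simp
next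
  case False
  then have c0: "0 < c" using c by simp
  have bla: "bdd_below (range a)" using a0 by (intro bdd_belowI) auto
  have blc: "bdd_below (range (\<lambda>n. c *\<^sub>R a n))" using a0 c by (intro bdd_belowI) (auto intro: scaleR_nonneg_nonneg)
  show ?thesis
  proof (rule antisym)
    have "(1/c) *\<^sub>R Inf (range (\<lambda>n. c *\<^sub>R a n)) \<le> Inf (range a)"
    proof (rule cINF_greatest)
      fix n
      have "Inf (range (\<lambda>n. c *\<^sub>R a n)) \<le> c *\<^sub>R a n" by (rule cINF_lower[OF blc]) simp
      then have "(1/c) *\<^sub>R Inf (range (\<lambda>n. c *\<^sub>R a n)) \<le> (1/c) *\<^sub>R (c *\<^sub>R a n)"
        by (rule scaleR_left_mono) (use c0 in simp)
      then show "(1/c) *\<^sub>R Inf (range (\<lambda>n. c *\<^sub>R a n)) \<le> a n" using c0 by simp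
    qed simp
    then have "c *\<^sub>R ((1/c) *\<^sub>R Inf (range (\<lambda>n. c *\<^sub>R a n))) \<le> c *\<^sub>R Inf (range a)"
      by (rule scaleR_left_mono[OF _ c])
    then show "Inf (range (\<lambda>n. c *\<^sub>R a n)) \<le> c *\<^sub>R Inf (range a)" using c0 by simp
    show "c *\<^sub>R Inf (range a) \<le> Inf (range (\<lambda>n. c *\<^sub>R a n))"
    proof (rule cINF_greatest)
      fix n
      show "c *\<^sub>R Inf (range a) \<le> c *\<^sub>R a n" by (rule scaleR_left_mono[OF cINF_lower[OF bla] c]) simp
    qed simp
  qed
qed

lemma op_inf_pointwise:
  fixes Y :: "nat \<Rightarrow> 'a \<Rightarrow> 'a"
  assumes Yb: "\<forall>n. order_bounded_op (Y n)" and Ydec: "\<forall>n. op_le (Y (Suc n)) (Y n)"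
    and Ypos: "\<forall>n. op_le (\<lambda>x. 0) (Y n)"
    and Yinf: "\<forall>S. order_bounded_op S \<and> (\<forall>n. op_le S (Y n)) \<longrightarrow> op_le S (\<lambda>x. 0)"
    and x: "0 \<le> x" and w: "\<forall>n. w \<le> Y n x"
  shows "w \<le> 0"
proof -
  have lin: "linear (Y n)" for n using Yb unfolding order_bounded_op_def by blast
  have Yadd: "Y n (a + b) = Y n a + Y n b" for n a b by (rule linear_add[OF lin])
  have Ysc: "Y n (c *\<^sub>R a) = c *\<^sub>R Y n a" for n c a by (rule linear_cmul[OF lin])
  have Y0: "0 \<le> a \<Longrightarrow> 0 \<le> Y n a" for n a using Ypos unfolding op_le_def by blast
  have Yd: "0 \<le> a \<Longrightarrow> Y (Suc n) a \<le> Y n a" for n a using Ydec unfolding op_le_def by blast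
  define S0 where "S0 a = Inf (range (\<lambda>n. Y n a))" for a
  have S0add: "0 \<le> a \<Longrightarrow> 0 \<le> b \<Longrightarrow> S0 (a + b) = S0 a + S0 b" for a b
    unfolding S0_def Yadd by (rule inf_seq_add) (auto intro: Yd Y0)
  have S0sc: "0 \<le> a \<Longrightarrow> 0 \<le> c \<Longrightarrow> S0 (c *\<^sub>R a) = c *\<^sub>R S0 a" for a c
    unfolding S0_def Ysc by (rule inf_seq_scale) (auto intro: Y0)
  have S00: "S0 0 = 0" using S0sc[of 0 0] by simp
  have S0le: "0 \<le> a \<Longrightarrow> S0 a \<le> Y n a" for a n
    unfolding S0_def by (rule cINF_lower) (auto intro!: bdd_belowI[of _ 0] Y0)
  have S0ge: "0 \<le> a \<Longrightarrow> 0 \<le> S0 a" for a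
    unfolding S0_def by (rule cINF_greatest) (auto intro: Y0)
  define S where "S a = S0 (pos a) - S0 (neg a)" for a
  have Srep: "S a = S0 p - S0 q" if "0 \<le> p" "0 \<le> q" "a = p - q" for a p q
  proof -
    have "pos a + q = p + neg a" using that pos_neg[of a] by (simp add: algebra_simps)
    then have "S0 (pos a) + S0 q = S0 p + S0 (neg a)"
      using S0add[OF pos_ge0 that(2), of a] S0add[OF that(1) neg_ge0, of a] by simp
    then show ?thesis unfolding S_def by (simp add: algebra_simps)
  qed
  have Spos: "0 \<le> a \<Longrightarrow> S a = S0 a" for a using Srep[of a 0 a] S00 by simp
  have Sadd: "S (a + b) = S a + S b" for a b
  proof -
    have "S (a + b) = S0 (pos a + pos b) - S0 (neg a + neg b)"
      by (rule Srep) (auto intro: add_nonneg_nonneg pos_ge0 neg_ge0 simp only: add_diff_add pos_neg)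
    also have "\<dots> = S a + S b" unfolding S_def
      using S0add[OF pos_ge0 pos_ge0, of a b] S0add[OF neg_ge0 neg_ge0, of a b] by simp
    finally show ?thesis .
  qed
  have Ssc: "S (c *\<^sub>R a) = c *\<^sub>R S a" for c a
  proof (cases "0 \<le> c")
    case True
    have "S (c *\<^sub>R a) = S0 (c *\<^sub>R pos a) - S0 (c *\<^sub>R neg a)"
      by (rule Srep) (auto intro: scaleR_nonneg_nonneg True pos_ge0 neg_ge0 simp: scaleR_diff_right[symmetric] pos_neg)
    also have "\<dots> = c *\<^sub>R S a" unfolding S_def
      using S0sc[OF pos_ge0 True, of a] S0sc[OF neg_ge0 True, of a] by (simp add: scaleR_diff_right)
    finally show ?thesis .
  next
    case False
    then have c': "0 \<le> - c" by simp
    have "S (c *\<^sub>R a) = S0 ((- c) *\<^sub>R neg a) - S0 ((- c) *\<^sub>R pos a)"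
    proof (rule Srep)
      show "0 \<le> (- c) *\<^sub>R neg a" by (rule scaleR_nonneg_nonneg[OF c' neg_ge0])
      show "0 \<le> (- c) *\<^sub>R pos a" by (rule scaleR_nonneg_nonneg[OF c' pos_ge0])
      have "c *\<^sub>R a = c *\<^sub>R (pos a - neg a)" by (simp add: pos_neg)
      then show "c *\<^sub>R a = (- c) *\<^sub>R neg a - (- c) *\<^sub>R pos a" by (simp add: algebra_simps)
    qed
    also have "\<dots> = c *\<^sub>R S a" unfolding S_def
      using S0sc[OF pos_ge0 c', of a] S0sc[OF neg_ge0 c', of a] by (simp add: algebra_simps)
    finally show ?thesis .
  qed
  have Slin: "linear S" by (rule linearI[OF Sadd Ssc])
  have Smono: "a \<le> b \<Longrightarrow> S a \<le> S b" for a b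
  proof -
    assume "a \<le> b"
    then have "0 \<le> b - a" by simp
    then have "0 \<le> S (b - a)" using Spos S0ge by metis
    moreover have "S (b - a) = S b - S a" using Sadd[of "b - a" a] by simp
    ultimately show ?thesis by simp
  qed
  have "order_bounded_op S" unfolding order_bounded_op_def
  proof (intro conjI Slin allI)
    fix a b show "\<exists>c d. \<forall>x. a \<le> x \<and> x \<le> b \<longrightarrow> c \<le> S x \<and> S x \<le> d"
      by (rule exI[of _ "S a"], rule exI[of _ "S b"]) (auto intro: Smono)
  qed
  moreover have "\<forall>n. op_le S (Y n)" unfolding op_le_def using Spos S0le by simp
  ultimately have "op_le S (\<lambda>x. 0)" using Yinf by blast
  then have "S x \<le> 0" using x unfolding op_le_def by blast
  then have "S0 x \<le> 0" using Spos[OF x] by simp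
  moreover have "w \<le> S0 x" unfolding S0_def by (rule cINF_greatest) (use w in auto)
  ultimately show ?thesis by simp
qed

end



context fixes dummy :: "'a::{ordered_real_vector,conditionally_complete_lattice}" begin
interpretation L: lattice_ab_group_add "(+)" "0::'a" "(-)" uminus "(\<le>)" "(<)" inf sup
  by unfold_locales

lemma sum_split_at:
  fixes g :: "nat \<Rightarrow> 'a"
  assumes "m \<le> n" shows "(\<Sum>k<n. g k) = (\<Sum>k<m. g k) + (\<Sum>k\<in>{m..<n}. g k)"
  using sum.atLeastLessThan_concat[of 0 m n g] assms by (simp add: lessThan_atLeast0)

lemma cesaro_null:
  assumes z: "nulldec (z::nat \<Rightarrow> 'a)"
  shows "\<exists>v. nulldec v \<and> (\<forall>n. (1 / real n) *\<^sub>R (\<Sum>k<n. z k) \<le> v n)"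
proof -
  define C where "C n = (1 / real n) *\<^sub>R (\<Sum>k<n. z k)" for n
  have z0: "\<And>n. 0 \<le> z n" using z unfolding nulldec_def by blast
  have zd: "\<And>m n. m \<le> n \<Longrightarrow> z n \<le> z m" using z unfolding nulldec_def by (blast intro: decseqD)
  have C0: "0 \<le> C n" for n unfolding C_def by (intro scaleR_nonneg_nonneg sum_nonneg z0) simp
  have Cz0: "C n \<le> z 0" for n
  proof (cases "n = 0")
    case True then show ?thesis using z0[of 0] by (simp add: C_def)
  next
    case False
    have "(\<Sum>k<n. z k) \<le> (\<Sum>k<n. z 0)" by (rule sum_mono) (rule zd, simp)
    also have "\<dots> = real n *\<^sub>R z 0" by (simp add: sum_constant_scaleR)
    finally have "C n \<le> (1 / real n) *\<^sub>R (real n *\<^sub>R z 0)" unfolding C_def by (rule scaleR_left_mono) simp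
    then show ?thesis using False by simp
  qed
  have bd: "bdd_above (C ` {n..})" for n by (rule bdd_aboveI[of _ "z 0"]) (use Cz0 in auto)
  define v where "v n = Sup (C ` {n..})" for n
  have Cv: "C n \<le> v n" for n unfolding v_def by (rule cSUP_upper[OF _ bd]) simp
  have vdec: "v (Suc n) \<le> v n" for n unfolding v_def
    by (rule cSUP_least) (auto intro!: cSUP_upper[OF _ bd])
  have Cbound: "C n \<le> (real m / real n) *\<^sub>R z 0 + z m" if mn: "m \<le> n" and m1: "1 \<le> m" for m n
  proof -
    have n0: "0 < real n" using mn m1 by simp
    have "(\<Sum>k<m. z k) \<le> (\<Sum>k<m. z 0)" by (rule sum_mono) (rule zd, simp)
    also have "\<dots> = real m *\<^sub>R z 0" by (simp add: sum_constant_scaleR)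
    finally have s1: "(\<Sum>k<m. z k) \<le> real m *\<^sub>R z 0" .
    have "(\<Sum>k\<in>{m..<n}. z k) \<le> (\<Sum>k\<in>{m..<n}. z m)" by (rule sum_mono) (rule zd, simp)
    also have "\<dots> = real (n - m) *\<^sub>R z m" by (simp add: sum_constant_scaleR)
    also have "\<dots> \<le> real n *\<^sub>R z m" by (rule scaleR_right_mono[OF _ z0]) simp
    finally have s2: "(\<Sum>k\<in>{m..<n}. z k) \<le> real n *\<^sub>R z m" .
    have "(\<Sum>k<n. z k) \<le> real m *\<^sub>R z 0 + real n *\<^sub>R z m"
      unfolding sum_split_at[OF mn] by (rule add_mono[OF s1 s2])
    then have "C n \<le> (1 / real n) *\<^sub>R (real m *\<^sub>R z 0 + real n *\<^sub>R z m)"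
      unfolding C_def by (rule scaleR_left_mono) simp
    also have "\<dots> = (real m / real n) *\<^sub>R z 0 + z m" using n0 by (simp add: scaleR_add_right)
    finally show ?thesis .
  qed
  have vbound: "v N \<le> (real m / real N) *\<^sub>R z 0 + z m" if mN: "m \<le> N" and m1: "1 \<le> m" for m N
    unfolding v_def
  proof (rule cSUP_least)
    fix n assume "n \<in> {N..}"
    then have Nn: "N \<le> n" by simp
    have "C n \<le> (real m / real n) *\<^sub>R z 0 + z m" by (rule Cbound) (use mN Nn m1 in auto)
    also have "\<dots> \<le> (real m / real N) *\<^sub>R z 0 + z m"
    proof (rule add_right_mono, rule scaleR_right_mono[OF _ z0])
      show "real m / real n \<le> real m / real N" using Nn mN m1 by (intro divide_left_mono) auto
    qed
    finally show "C n \<le> (real m / real N) *\<^sub>R z 0 + z m" .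
  qed simp
  have "nulldec v" unfolding nulldec_def
  proof (intro conjI allI impI)
    show "decseq v" by (rule decseq_SucI) (rule vdec)
    fix n show "0 \<le> v n" using C0[of n] Cv[of n] by simp
  next
    fix w assume w: "\<forall>n. w \<le> v n"
    have "w \<le> z m" if m1: "1 \<le> m" for m
    proof -
      let ?q = "w - z m"
      have "\<forall>N::nat. real N *\<^sub>R pos ?q \<le> real m *\<^sub>R z 0"
      proof
        fix N :: nat
        let ?K = "N + m"
        have K0: "0 < real ?K" using m1 by simp
        have "w \<le> (real m / real ?K) *\<^sub>R z 0 + z m" using w vbound[of m ?K] m1 by (metis le_add2 order_trans)
        then have "?q \<le> (real m / real ?K) *\<^sub>R z 0" by (simp add: algebra_simps)
        then have "real ?K *\<^sub>R ?q \<le> real ?K *\<^sub>R ((real m / real ?K) *\<^sub>R z 0)"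
          by (rule scaleR_left_mono) simp
        then have Kq: "real ?K *\<^sub>R ?q \<le> real m *\<^sub>R z 0" using K0 by simp
        have mz: "0 \<le> real m *\<^sub>R z 0" by (rule scaleR_nonneg_nonneg[OF _ z0]) simp
        have "real ?K *\<^sub>R pos ?q = sup (real ?K *\<^sub>R ?q) (real ?K *\<^sub>R 0)"
          unfolding pos_def by (rule scaleR_sup) simp
        also have "\<dots> \<le> real m *\<^sub>R z 0" by (rule sup_least[OF Kq]) (simp add: mz)
        finally have "real ?K *\<^sub>R pos ?q \<le> real m *\<^sub>R z 0" .
        moreover have "real N *\<^sub>R pos ?q \<le> real ?K *\<^sub>R pos ?q" by (rule scaleR_right_mono[OF _ pos_ge0]) simp
        ultimately show "real N *\<^sub>R pos ?q \<le> real m *\<^sub>R z 0" by simp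
      qed
      then have "pos ?q \<le> 0" by (rule archimedean)
      then have "?q \<le> 0" unfolding pos_def by (metis sup_ge1 order_trans)
      then show ?thesis by simp
    qed
    then show "w \<le> 0" by (intro nulldec_tail[OF z, of 1]) auto
  qed
  then show ?thesis using Cv unfolding C_def by blast
qed

lemma reverse_direction:
  fixes f :: "nat \<Rightarrow> 'a"
  assumes f0: "\<forall>n. 0 \<le> f n" and fb: "\<exists>b. \<forall>n. f n \<le> b"
    and P: "\<forall>n. band_projection (P n)" and dz: "density_zero P"
    and conv: "order_convergent (\<lambda>n. f n - P n (f n)) 0"
  shows "order_convergent (\<lambda>n. (1 / real n) *\<^sub>R (\<Sum>k<n. f k)) 0"
proof -
  obtain b where b: "\<And>n. f n \<le> b" using fb by blast
  have b0: "0 \<le> b" using f0 b[of 0] by (metis order_trans)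
  obtain Y where Yb: "\<forall>n. order_bounded_op (Y n)" and Ydec: "\<forall>n. op_le (Y (Suc n)) (Y n)"
    and Ypos: "\<forall>n. op_le (\<lambda>x. 0) (Y n)"
    and Yinf: "\<forall>S. order_bounded_op S \<and> (\<forall>n. op_le S (Y n)) \<longrightarrow> op_le S (\<lambda>x. 0)"
    and Ydom: "\<forall>n. op_le (\<lambda>x. (1 / real n) *\<^sub>R (\<Sum>k<n. P k x) - 0) (Y n)"
    using dz unfolding density_zero_def op_order_convergent_def by blast
  define u where "u n = Y n b" for n
  have "nulldec u" unfolding nulldec_def
  proof (intro conjI allI impI)
    show "decseq u" unfolding u_def by (rule decseq_SucI) (use Ydec b0 in \<open>auto simp: op_le_def\<close>)
    fix n show "0 \<le> u n" unfolding u_def using Ypos b0 by (auto simp: op_le_def)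
  next
    fix w assume "\<forall>n. w \<le> u n"
    then show "w \<le> 0" unfolding u_def by (rule op_inf_pointwise[OF Yb Ydec Ypos Yinf b0])
  qed
  obtain z where z: "nulldec z" and zd: "\<And>n. rabs (f n - P n (f n) - 0) \<le> z n"
    using conv unfolding order_convergent_iff by blast
  obtain v where v: "nulldec v" and Cv: "\<And>n. (1 / real n) *\<^sub>R (\<Sum>k<n. z k) \<le> v n"
    using cesaro_null[OF z] by blast
  have "nulldec (\<lambda>n. u n + v n)" by (rule nulldec_add[OF \<open>nulldec u\<close> v])
  moreover have "rabs ((1 / real n) *\<^sub>R (\<Sum>k<n. f k) - 0) \<le> u n + v n" for n
  proof -
    have nn: "0 \<le> 1 / real n" by simp
    have split: "(\<Sum>k<n. f k) = (\<Sum>k<n. P k (f k)) + (\<Sum>k<n. f k - P k (f k))"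
      by (simp add: sum.distrib[symmetric])
    have "(\<Sum>k<n. P k (f k)) \<le> (\<Sum>k<n. P k b)" by (rule sum_mono) (rule bp_mono[OF P[rule_format] b])
    then have 1: "(1 / real n) *\<^sub>R (\<Sum>k<n. P k (f k)) \<le> u n"
      using Ydom b0 unfolding op_le_def u_def by (metis (no_types, lifting) diff_zero nn order_trans scaleR_left_mono)
    have "(\<Sum>k<n. f k - P k (f k)) \<le> (\<Sum>k<n. z k)"
    proof (rule sum_mono)
      fix k show "f k - P k (f k) \<le> z k" using zd[of k] le_rabs[of "f k - P k (f k)"] by simp
    qed
    then have 2: "(1 / real n) *\<^sub>R (\<Sum>k<n. f k - P k (f k)) \<le> v n"
      using Cv[of n] by (metis nn order_trans scaleR_left_mono)
    have a0: "0 \<le> (1 / real n) *\<^sub>R (\<Sum>k<n. f k)" by (intro scaleR_nonneg_nonneg sum_nonneg) (use f0 in auto)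
    have "(1 / real n) *\<^sub>R (\<Sum>k<n. f k) \<le> u n + v n"
      unfolding split scaleR_add_right by (rule add_mono[OF 1 2])
    then show ?thesis using rabs_of_nonneg[OF a0] by simp
  qed
  ultimately show ?thesis unfolding order_convergent_iff by blast
qed

end



lemma pbp_le_gen:
  fixes u v x :: "'a::{ordered_real_vector,conditionally_complete_lattice}"
  assumes "0 \<le> v" "v \<le> u" "0 \<le> x" shows "pbp v x \<le> pbp u x"
proof -
  have u: "0 \<le> u" using assms by simp
  have "pbp v x = pbp u (pbp v x)" using pbp_nested[OF assms(1,2)] by simp
  also have "\<dots> \<le> pbp u x" by (rule bp_mono[OF pbp_bp[OF u] bp_le[OF pbp_bp[OF assms(1)] assms(3)]])
  finally show ?thesis .
qed

lemma pos_mono: "x \<le> y \<Longrightarrow> pos x \<le> pos (y::'a::{ordered_real_vector,conditionally_complete_lattice})"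
  unfolding pos_def by (rule sup_mono) simp_all

lemma sum_lessThan_add_split:
  fixes a b :: nat and g :: "nat \<Rightarrow> 'b::comm_monoid_add"
  shows "(\<Sum>i<a+b. g i) = (\<Sum>i<a. g i) + (\<Sum>i<b. g (a+i))"
  by (induction b) (simp_all add: add.assoc)

locale fwd =
  fixes e :: "'a::{ordered_real_vector,conditionally_complete_lattice}" and f y :: "nat \<Rightarrow> 'a"
  assumes e: "weak_order_unit e" and f0: "\<And>n. 0 \<le> f n" and y: "nulldec y"
    and ay: "\<And>n. (1 / real n) *\<^sub>R (\<Sum>k<n. f k) \<le> y n"
begin

definition eps :: "nat \<Rightarrow> real" where "eps j = (1/2)^j"
definition del :: "nat \<Rightarrow> real" where "del j = eps j * eps j"
definition cc :: "nat \<Rightarrow> real" where "cc j = eps j - eps (Suc j)"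
definition T :: "nat \<Rightarrow> nat \<Rightarrow> 'a \<Rightarrow> 'a" where "T j n = pbp (pos (y n - del j *\<^sub>R e))"
definition Y :: "nat \<Rightarrow> 'a \<Rightarrow> 'a" where "Y n x = eps n *\<^sub>R x + (\<Sum>j<n. cc j *\<^sub>R T (Suc j) n x)"
definition h :: "nat \<Rightarrow> 'a" where "h n = Y n e"
definition PP :: "nat \<Rightarrow> 'a \<Rightarrow> 'a" where "PP n = pbp (pos (f n - h n))"

lemma e0: "0 \<le> e" using e unfolding weak_order_unit_def by simp
lemma y0: "0 \<le> y n" using y unfolding nulldec_def by blast
lemma ydec: "m \<le> n \<Longrightarrow> y n \<le> y m" using y unfolding nulldec_def by (blast intro: decseqD)

lemma eps_pos: "0 < eps j" unfolding eps_def by simp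
lemma eps_le1: "eps j \<le> 1" unfolding eps_def by (simp add: power_le_one)
lemma eps0: "eps 0 = 1" unfolding eps_def by simp
lemma del_pos: "0 < del j" unfolding del_def using eps_pos by simp
lemma cc_eq: "cc j = eps (Suc j)" unfolding cc_def eps_def by simp
lemma cc_pos: "0 \<le> cc j" using eps_pos cc_eq by (simp add: less_imp_le)
lemma del_mono: "i \<le> j \<Longrightarrow> del j \<le> del i"
  unfolding del_def eps_def by (simp add: power_decreasing mult_mono)
lemma sum_cc: "(\<Sum>j<n. cc j) = 1 - eps n"
  unfolding cc_def using sum_lessThan_telescope'[of eps n] eps0 by simp
lemma sum_cc_ivl: assumes "m \<le> n" shows "(\<Sum>j\<in>{m..<n}. cc j) = eps m - eps n"
proof -
  have "(\<Sum>j<n. cc j) = (\<Sum>j<m. cc j) + (\<Sum>j\<in>{m..<n}. cc j)"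
    using sum.atLeastLessThan_concat[of 0 m n cc] assms by (simp add: lessThan_atLeast0)
  then show ?thesis using sum_cc[of n] sum_cc[of m] by simp
qed

lemma T_bp: "band_projection (T j n)" unfolding T_def by (rule pbp_bp[OF pos_ge0])

lemma T_nested: assumes "i \<le> j" shows "T j n (T i n x) = T i n x" "T i n (T j n x) = T i n x"
proof -
  have le: "pos (y n - del i *\<^sub>R e) \<le> pos (y n - del j *\<^sub>R e)"
    by (rule pos_mono) (simp add: scaleR_right_mono[OF del_mono[OF assms] e0])
  show 1: "T j n (T i n x) = T i n x" unfolding T_def by (rule pbp_nested[OF pos_ge0 le])
  show "T i n (T j n x) = T i n x" using 1 bp_commute[OF T_bp T_bp, of i n j n x] by simp
qed

lemma T_mono_j: "i \<le> j \<Longrightarrow> 0 \<le> x \<Longrightarrow> T i n x \<le> T j n x"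
  unfolding T_def
  by (rule pbp_le_gen[OF pos_ge0 pos_mono]) (simp_all add: scaleR_right_mono[OF del_mono e0])

lemma T_mono_n: "n \<le> m \<Longrightarrow> 0 \<le> x \<Longrightarrow> T j m x \<le> T j n x"
  unfolding T_def
  by (rule pbp_le_gen[OF pos_ge0 pos_mono]) (simp_all add: ydec)

lemma T_e: "del j *\<^sub>R T j n e \<le> y n"
proof -
  have "T j n (y n - del j *\<^sub>R e) = pos (y n - del j *\<^sub>R e)" unfolding T_def by (rule pbp_pos_part)
  then have "0 \<le> T j n (y n) - del j *\<^sub>R T j n e"
    using pos_ge0 bp_diff[OF T_bp] bp_scale[OF T_bp] by metis
  then have "del j *\<^sub>R T j n e \<le> T j n (y n)" by simp
  also have "\<dots> \<le> y n" by (rule bp_le[OF T_bp y0])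
  finally show ?thesis .
qed

lemma T_compl: "y n - T j n (y n) \<le> del j *\<^sub>R (e - T j n e)"
proof -
  let ?v = "y n - del j *\<^sub>R e"
  have "T j n ?v = pos ?v" unfolding T_def by (rule pbp_pos_part)
  then have "?v - T j n ?v = - neg ?v" using pos_neg[of ?v] by (simp add: algebra_simps)
  then have "?v - T j n ?v \<le> 0" using neg_ge0[of ?v] by simp
  then show ?thesis using bp_diff[OF T_bp] bp_scale[OF T_bp] by (simp add: algebra_simps)
qed

lemma Y_add: "Y n (a + b) = Y n a + Y n b"
  unfolding Y_def by (simp add: bp_add[OF T_bp] scaleR_add_right sum.distrib algebra_simps)
lemma Y_scale: "Y n (c *\<^sub>R a) = c *\<^sub>R Y n a"
  unfolding Y_def by (simp add: bp_scale[OF T_bp] scaleR_add_right scaleR_right.sum algebra_simps)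
lemma Y_diff: "Y n (a - b) = Y n a - Y n b"
  using Y_add[of n "a - b" b] by simp
lemma Y_linear: "linear (Y n)" by (rule linearI[OF Y_add Y_scale])
lemma Y_pos: "0 \<le> x \<Longrightarrow> 0 \<le> Y n x"
  unfolding Y_def
  by (intro add_nonneg_nonneg sum_nonneg scaleR_nonneg_nonneg cc_pos bp_pos[OF T_bp] less_imp_le[OF eps_pos])
lemma Y_mono: "a \<le> b \<Longrightarrow> Y n a \<le> Y n b"
  using Y_pos[of "b - a" n] Y_diff[of n b a] by simp

lemma Y_dec: assumes x: "0 \<le> x" shows "Y (Suc n) x \<le> Y n x"
proof -
  have "(\<Sum>j<n. cc j *\<^sub>R T (Suc j) (Suc n) x) \<le> (\<Sum>j<n. cc j *\<^sub>R T (Suc j) n x)"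
    by (rule sum_mono) (rule scaleR_left_mono[OF T_mono_n[OF _ x] cc_pos], simp)
  moreover have "cc n *\<^sub>R T (Suc n) (Suc n) x \<le> cc n *\<^sub>R x"
    by (rule scaleR_left_mono[OF bp_le[OF T_bp x] cc_pos])
  ultimately have "Y (Suc n) x \<le> eps (Suc n) *\<^sub>R x + (\<Sum>j<n. cc j *\<^sub>R T (Suc j) n x) + cc n *\<^sub>R x"
    unfolding Y_def by (simp add: add_mono)
  also have "\<dots> = Y n x" unfolding Y_def cc_def by (simp add: algebra_simps)
  finally show ?thesis .
qed

lemma Y_bound: assumes Jn: "J \<le> n" and x: "0 \<le> x" shows "Y n x \<le> eps J *\<^sub>R x + T J n x"
proof -
  have "(\<Sum>j<n. cc j *\<^sub>R T (Suc j) n x) = (\<Sum>j<J. cc j *\<^sub>R T (Suc j) n x) + (\<Sum>j\<in>{J..<n}. cc j *\<^sub>R T (Suc j) n x)"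
    using sum.atLeastLessThan_concat[of 0 J n "\<lambda>j. cc j *\<^sub>R T (Suc j) n x"] Jn by (simp add: lessThan_atLeast0)
  also have "(\<Sum>j<J. cc j *\<^sub>R T (Suc j) n x) \<le> (\<Sum>j<J. cc j *\<^sub>R T J n x)"
    by (rule sum_mono) (rule scaleR_left_mono[OF T_mono_j[OF _ x] cc_pos], simp)
  also have "\<dots> = (1 - eps J) *\<^sub>R T J n x" using sum_cc[of J] by (simp add: scaleR_left.sum[symmetric])
  also have "\<dots> \<le> T J n x"
    using scaleR_right_mono[of "1 - eps J" 1 "T J n x"] eps_pos[of J] bp_pos[OF T_bp x] by simp
  also have "(\<Sum>j\<in>{J..<n}. cc j *\<^sub>R T (Suc j) n x) \<le> (\<Sum>j\<in>{J..<n}. cc j *\<^sub>R x)"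
    by (rule sum_mono) (rule scaleR_left_mono[OF bp_le[OF T_bp x] cc_pos])
  also have "\<dots> = (eps J - eps n) *\<^sub>R x" using sum_cc_ivl[OF Jn] by (simp add: scaleR_left.sum[symmetric])
  finally have "(\<Sum>j<n. cc j *\<^sub>R T (Suc j) n x) \<le> T J n x + (eps J - eps n) *\<^sub>R x"
    by (simp add: add_mono)
  then have "Y n x \<le> eps n *\<^sub>R x + (T J n x + (eps J - eps n) *\<^sub>R x)"
    unfolding Y_def by (rule add_left_mono)
  also have "\<dots> = eps J *\<^sub>R x + T J n x" by (simp add: algebra_simps)
  finally show ?thesis .
qed

end



context fwd begin

lemma T_inf: assumes x: "0 \<le> x" and w: "\<And>n. n \<ge> J \<Longrightarrow> w \<le> T J n x" shows "w \<le> 0"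
proof -
  have wk: "w \<le> x - inf x (real k *\<^sub>R e)" for k
  proof -
    let ?xk = "inf x (real k *\<^sub>R e)"
    have xk0: "0 \<le> x - ?xk" by simp
    have "w - (x - ?xk) \<le> 0"
    proof (rule nulldec_scaled[OF y, of "real k / del J" J])
      show "0 \<le> real k / del J" using del_pos[of J] by simp
      fix n assume n: "J \<le> n"
      have "T J n x = T J n ?xk + T J n (x - ?xk)" using bp_add[OF T_bp, of J n ?xk "x - ?xk"] by simp
      also have "T J n ?xk \<le> real k *\<^sub>R T J n e"
        using bp_mono[OF T_bp inf_le2[of x "real k *\<^sub>R e"], of J n] bp_scale[OF T_bp] by metis
      also have "T J n (x - ?xk) \<le> x - ?xk" by (rule bp_le[OF T_bp xk0])
      finally have 1: "T J n x \<le> real k *\<^sub>R T J n e + (x - ?xk)" by (simp add: add_mono)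
      have "real k *\<^sub>R T J n e = (real k / del J) *\<^sub>R (del J *\<^sub>R T J n e)" using del_pos[of J] by simp
      also have "\<dots> \<le> (real k / del J) *\<^sub>R y n"
        by (rule scaleR_left_mono[OF T_e]) (use del_pos[of J] in simp)
      finally have "T J n x \<le> (real k / del J) *\<^sub>R y n + (x - ?xk)" using 1 by (metis add_right_mono order_trans)
      then have "w \<le> (real k / del J) *\<^sub>R y n + (x - ?xk)" using w[OF n] by (metis order_trans)
      then show "w - (x - ?xk) \<le> (real k / del J) *\<^sub>R y n" by (simp only: diff_le_eq)
    qed
    then show ?thesis by simp
  qed
  have "Sup (range (\<lambda>k::nat. inf x (real k *\<^sub>R e))) \<le> x - w"
    by (rule cSUP_least) (use wk in \<open>auto simp: algebra_simps\<close>)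
  then have "x \<le> x - w" using weak_unit_sup[OF e x] by simp
  then show ?thesis by simp
qed

lemma Y_inf: assumes x: "0 \<le> x" and w: "\<And>n. w \<le> Y n x" shows "w \<le> 0"
proof (rule archimedean_geom[OF x])
  fix J :: nat
  have "w - eps J *\<^sub>R x \<le> 0"
  proof (rule T_inf[OF x, of J])
    fix n assume "J \<le> n"
    then have "w \<le> eps J *\<^sub>R x + T J n x" using w[of n] Y_bound[OF _ x, of J n] by (metis order_trans)
    then show "w - eps J *\<^sub>R x \<le> T J n x" by (simp add: algebra_simps)
  qed
  then show "w \<le> (1/2)^J *\<^sub>R x" unfolding eps_def by simp
qed

lemma h0: "0 \<le> h n" unfolding h_def by (rule Y_pos[OF e0])
lemma h_dec: "decseq h" unfolding h_def by (rule decseq_SucI) (rule Y_dec[OF e0])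
lemma h_anti: "k \<le> n \<Longrightarrow> h n \<le> h k" using h_dec by (rule decseqD)
lemma h_null: "nulldec h"
  unfolding nulldec_def using h0 h_dec Y_inf[OF e0] unfolding h_def by blast

lemma PP_bp: "band_projection (PP n)" unfolding PP_def by (rule pbp_bp[OF pos_ge0])
lemma PP_fh: "PP n (h n) \<le> PP n (f n)"
proof -
  have "PP n (f n - h n) = pos (f n - h n)" unfolding PP_def by (rule pbp_pos_part)
  then have "0 \<le> PP n (f n) - PP n (h n)" using pos_ge0 bp_diff[OF PP_bp] by metis
  then show ?thesis by simp
qed
lemma PP_rest: "f n - PP n (f n) \<le> h n" "0 \<le> f n - PP n (f n)"
proof -
  let ?v = "f n - h n"
  have "PP n ?v = pos ?v" unfolding PP_def by (rule pbp_pos_part)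
  then have "?v - PP n ?v = - neg ?v" using pos_neg[of ?v] by (simp add: algebra_simps)
  then have 1: "?v - PP n ?v \<le> 0" using neg_ge0[of ?v] by simp
  have 2: "h n - PP n (h n) \<le> h n" using bp_pos[OF PP_bp h0] by simp
  have "f n - PP n (f n) = (?v - PP n ?v) + (h n - PP n (h n))" using bp_diff[OF PP_bp] by (simp add: algebra_simps)
  also have "\<dots> \<le> 0 + h n" by (rule add_mono[OF 1 2])
  finally show "f n - PP n (f n) \<le> h n" by simp
  show "0 \<le> f n - PP n (f n)" using bp_le[OF PP_bp f0] by simp
qed

end



context fwd begin

definition D :: "nat \<Rightarrow> 'a \<Rightarrow> 'a" where "D n x = (1 / real n) *\<^sub>R (\<Sum>k<n. PP k x)"
definition TT :: "nat \<Rightarrow> nat \<Rightarrow> 'a \<Rightarrow> 'a" where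
  "TT n j = (if j = 0 then (\<lambda>x. 0) else if j \<le> n then T j n else (\<lambda>x. x))"
definition LL :: "nat \<Rightarrow> nat \<Rightarrow> 'a \<Rightarrow> 'a" where "LL n j x = TT n (Suc j) x - TT n j x"

lemma TT_bp: "band_projection (TT n j)"
  unfolding TT_def using bp_zero T_bp bp_id by auto

lemma TT_nested: assumes "a \<le> b" shows "TT n b (TT n a x) = TT n a x" "TT n a (TT n b x) = TT n a x"
proof -
  have "TT n b (TT n a x) = TT n a x \<and> TT n a (TT n b x) = TT n a x"
  proof (cases "a = 0")
    case True then show ?thesis unfolding TT_def using bp_zero_val[OF TT_bp[of n b]] TT_def by auto
  next
    case False
    show ?thesis
    proof (cases "b \<le> n")
      case True then show ?thesis unfolding TT_def using False assms T_nested[OF assms] by auto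
    next
      case b: False
      then show ?thesis unfolding TT_def using False assms by auto
    qed
  qed
  then show "TT n b (TT n a x) = TT n a x" "TT n a (TT n b x) = TT n a x" by auto
qed

lemma TT_T: "1 \<le> j \<Longrightarrow> j \<le> n \<Longrightarrow> TT n j = T j n" unfolding TT_def by auto

lemma LL_add: "LL n j (a + b) = LL n j a + LL n j b"
  unfolding LL_def by (simp add: bp_add[OF TT_bp] algebra_simps)
lemma LL_scale: "LL n j (c *\<^sub>R a) = c *\<^sub>R LL n j a"
  unfolding LL_def by (simp add: bp_scale[OF TT_bp] algebra_simps)
lemma LL_diff: "LL n j (a - b) = LL n j a - LL n j b"
  unfolding LL_def by (simp add: bp_diff[OF TT_bp] algebra_simps)
lemma LL_sum: "LL n j (sum g I) = (\<Sum>i\<in>I. LL n j (g i))"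
  unfolding LL_def by (simp add: bp_sum[OF TT_bp] sum_subtractf)
lemma LL_pos: assumes "0 \<le> z" shows "0 \<le> LL n j z"
proof -
  have "LL n j z = TT n (Suc j) (z - TT n j z)"
    unfolding LL_def using TT_nested(1)[of j "Suc j" n z] bp_diff[OF TT_bp] by simp
  also have "0 \<le> \<dots>" by (rule bp_pos[OF TT_bp]) (use bp_le[OF TT_bp assms] in simp)
  finally show ?thesis .
qed
lemma LL_mono: "a \<le> b \<Longrightarrow> LL n j a \<le> LL n j b"
  using LL_pos[of "b - a" n j] LL_diff[of n j b a] by simp

lemma LL_total: "(\<Sum>j<Suc n. LL n j z) = z"
proof -
  have "(\<Sum>j<Suc n. LL n j z) = TT n (Suc n) z - TT n 0 z"
    unfolding LL_def by (rule sum_lessThan_telescope)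
  then show ?thesis unfolding TT_def by simp
qed

lemma LL_TT: "LL n j (TT n (Suc i) z) = (if j \<le> i then LL n j z else 0)"
proof (cases "j \<le> i")
  case True
  then show ?thesis unfolding LL_def using TT_nested(2)[of "Suc j" "Suc i" n z] TT_nested(2)[of j "Suc i" n z] by simp
next
  case False
  then show ?thesis unfolding LL_def using TT_nested(1)[of "Suc i" "Suc j" n z] TT_nested(1)[of "Suc i" j n z] by simp
qed

lemma LL_Y: assumes jn: "j \<le> n" shows "LL n j (Y n z) = eps j *\<^sub>R LL n j z"
proof -
  have Yz: "Y n z = eps n *\<^sub>R z + (\<Sum>i<n. cc i *\<^sub>R TT n (Suc i) z)"
    unfolding Y_def by (rule arg_cong[where f="\<lambda>s. eps n *\<^sub>R z + s"], rule sum.cong) (simp_all add: TT_T)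
  have "LL n j (Y n z) = eps n *\<^sub>R LL n j z + (\<Sum>i<n. cc i *\<^sub>R (if j \<le> i then LL n j z else 0))"
    unfolding Yz by (simp add: LL_add LL_scale LL_sum LL_TT)
  also have "(\<Sum>i<n. cc i *\<^sub>R (if j \<le> i then LL n j z else 0)) = (\<Sum>i<n. (if j \<le> i then cc i else 0)) *\<^sub>R LL n j z"
    unfolding scaleR_left.sum by (rule sum.cong) simp_all
  also have "(\<Sum>i<n. (if j \<le> i then cc i else 0)) = (\<Sum>i\<in>{j..<n}. cc i)"
  proof -
    have "(\<Sum>i<n. (if j \<le> i then cc i else 0)) = (\<Sum>i<j. (if j \<le> i then cc i else 0)) + (\<Sum>i\<in>{j..<n}. (if j \<le> i then cc i else 0))"
      using sum.atLeastLessThan_concat[of 0 j n "\<lambda>i. if j \<le> i then cc i else 0"] jn by (simp add: lessThan_atLeast0)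
    then show ?thesis by simp
  qed
  also have "\<dots> = eps j - eps n" by (rule sum_cc_ivl[OF jn])
  finally show ?thesis by (simp add: algebra_simps)
qed

lemma LL_y: assumes j1: "1 \<le> j" and jn: "j \<le> n" shows "LL n j (y n) \<le> del j *\<^sub>R LL n j e"
proof -
  have Tj: "TT n j = T j n" by (rule TT_T[OF j1 jn])
  have "LL n j (y n) = TT n (Suc j) (y n - T j n (y n))"
    unfolding LL_def using TT_nested(1)[of j "Suc j" n "y n"] bp_diff[OF TT_bp] Tj by simp
  also have "\<dots> \<le> TT n (Suc j) (del j *\<^sub>R (e - T j n e))" by (rule bp_mono[OF TT_bp T_compl])
  also have "\<dots> = del j *\<^sub>R LL n j e"
    unfolding LL_def using TT_nested(1)[of j "Suc j" n e] bp_diff[OF TT_bp] bp_scale[OF TT_bp] Tj by simp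
  finally show ?thesis .
qed

lemma D_add: "D n (a + b) = D n a + D n b"
  unfolding D_def by (simp add: bp_add[OF PP_bp] sum.distrib scaleR_add_right)
lemma D_scale: "D n (c *\<^sub>R a) = c *\<^sub>R D n a"
  unfolding D_def by (simp add: bp_scale[OF PP_bp] scaleR_right.sum[symmetric])
lemma D_diff: "D n (a - b) = D n a - D n b"
  using D_add[of n "a - b" b] by simp
lemma D_pos: "0 \<le> x \<Longrightarrow> 0 \<le> D n x"
  unfolding D_def by (intro scaleR_nonneg_nonneg sum_nonneg bp_pos[OF PP_bp]) simp_all
lemma D_mono: "a \<le> b \<Longrightarrow> D n a \<le> D n b"
  using D_pos[of "b - a" n] D_diff[of n b a] by simp
lemma D_le: assumes n1: "1 \<le> n" and x: "0 \<le> x" shows "D n x \<le> x"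
proof -
  have "(\<Sum>k<n. PP k x) \<le> (\<Sum>k<n. x)" by (rule sum_mono) (rule bp_le[OF PP_bp x])
  also have "\<dots> = real n *\<^sub>R x" by (simp add: sum_constant_scaleR)
  finally have "D n x \<le> (1 / real n) *\<^sub>R (real n *\<^sub>R x)" unfolding D_def by (rule scaleR_left_mono) simp
  then show ?thesis using n1 by simp
qed
lemma D_TT: "D n (TT m j x) = TT m j (D n x)"
  unfolding D_def by (simp add: bp_scale[OF TT_bp] bp_sum[OF TT_bp] bp_commute[OF PP_bp TT_bp])
lemma D_LL: "D n (LL m j x) = LL m j (D n x)"
  unfolding LL_def by (simp add: D_diff D_TT)

lemma D_h: assumes n1: "1 \<le> n" shows "D n (h n) \<le> y n"
proof -
  have "(\<Sum>k<n. PP k (h n)) \<le> (\<Sum>k<n. f k)"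
  proof (rule sum_mono)
    fix k assume "k \<in> {..<n}"
    then have "h n \<le> h k" by (intro h_anti) simp
    then have "PP k (h n) \<le> PP k (h k)" by (rule bp_mono[OF PP_bp])
    also have "\<dots> \<le> PP k (f k)" by (rule PP_fh)
    also have "\<dots> \<le> f k" by (rule bp_le[OF PP_bp f0])
    finally show "PP k (h n) \<le> f k" .
  qed
  then have "D n (h n) \<le> (1 / real n) *\<^sub>R (\<Sum>k<n. f k)" unfolding D_def by (rule scaleR_left_mono) simp
  then show ?thesis using ay[of n] by (rule order_trans)
qed

lemma D_e: assumes n1: "1 \<le> n" shows "D n e \<le> h n"
proof -
  have lvl: "LL n j (D n e) \<le> LL n j (h n)" if j: "j < Suc n" for j
  proof (cases "j = 0")
    case True
    have "LL n j (D n e) = D n (LL n j e)" by (simp add: D_LL)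
    also have "\<dots> \<le> LL n j e" by (rule D_le[OF n1 LL_pos[OF e0]])
    also have "\<dots> = LL n j (h n)" unfolding h_def using LL_Y[of j n e] True eps0 by simp
    finally show ?thesis .
  next
    case False
    then have j1: "1 \<le> j" and jn: "j \<le> n" using j by auto
    have "eps j *\<^sub>R LL n j (D n e) = LL n j (D n (h n))"
      unfolding h_def by (simp add: D_LL[symmetric] LL_Y[OF jn] D_scale)
    also have "\<dots> \<le> LL n j (y n)" by (rule LL_mono[OF D_h[OF n1]])
    also have "\<dots> \<le> del j *\<^sub>R LL n j e" by (rule LL_y[OF j1 jn])
    also have "\<dots> = eps j *\<^sub>R (eps j *\<^sub>R LL n j e)" unfolding del_def by simp
    finally have "eps j *\<^sub>R LL n j (D n e) \<le> eps j *\<^sub>R (eps j *\<^sub>R LL n j e)" .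
    then have "(1 / eps j) *\<^sub>R (eps j *\<^sub>R LL n j (D n e)) \<le> (1 / eps j) *\<^sub>R (eps j *\<^sub>R (eps j *\<^sub>R LL n j e))"
      by (rule scaleR_left_mono) (use eps_pos[of j] in simp)
    then have "LL n j (D n e) \<le> eps j *\<^sub>R LL n j e" using eps_pos[of j] by simp
    also have "\<dots> = LL n j (h n)" unfolding h_def using LL_Y[OF jn, of e] by simp
    finally show ?thesis .
  qed
  have "D n e = (\<Sum>j<Suc n. LL n j (D n e))" by (simp only: LL_total)
  also have "\<dots> \<le> (\<Sum>j<Suc n. LL n j (h n))" by (rule sum_mono) (rule lvl, simp)
  also have "\<dots> = h n" by (simp only: LL_total)
  finally show ?thesis .
qed

lemma density: assumes x: "0 \<le> x" shows "D n x \<le> Y n x"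
proof (cases "n = 0")
  case True
  then show ?thesis using Y_pos[OF x, of n] by (simp add: D_def)
next
  case False
  then have n1: "1 \<le> n" by simp
  define R where "R i = (if i < n then T (Suc i) n else PP (i - n))" for i
  define c where "c i = (if i < n then cc i else - (1 / real n))" for i
  have R: "\<forall>i<n+n. band_projection (R i)" unfolding R_def using T_bp PP_bp by simp
  have iden: "eps n *\<^sub>R z + (\<Sum>i<n+n. c i *\<^sub>R R i z) = Y n z - D n z" for z
  proof -
    have "(\<Sum>i<n+n. c i *\<^sub>R R i z) = (\<Sum>i<n. c i *\<^sub>R R i z) + (\<Sum>i<n. c (n+i) *\<^sub>R R (n+i) z)"
      by (rule sum_lessThan_add_split)
    also have "(\<Sum>i<n. c i *\<^sub>R R i z) = (\<Sum>i<n. cc i *\<^sub>R T (Suc i) n z)"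
      by (rule sum.cong) (simp_all add: c_def R_def)
    also have "(\<Sum>i<n. c (n+i) *\<^sub>R R (n+i) z) = (\<Sum>i<n. (- (1 / real n)) *\<^sub>R PP i z)"
      by (rule sum.cong) (simp_all add: c_def R_def)
    also have "\<dots> = - D n z" unfolding D_def by (simp add: scaleR_right.sum sum_negf)
    finally show ?thesis unfolding Y_def by (simp add: algebra_simps)
  qed
  have "0 \<le> (\<lambda>x. x) (eps n *\<^sub>R e + (\<Sum>i<n+n. c i *\<^sub>R R i e))"
    unfolding iden using D_e[OF n1] unfolding h_def by simp
  then have "0 \<le> (\<lambda>x. x) (eps n *\<^sub>R x + (\<Sum>i<n+n. c i *\<^sub>R R i x))"
    by (rule etest[OF e x bp_id R])
  then show ?thesis unfolding iden by simp
qed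

end



context fwd begin

lemma fwd_main:
  "\<exists>P. (\<forall>n. band_projection (P n)) \<and> density_zero P \<and> order_convergent (\<lambda>n. f n - P n (f n)) 0"
proof (intro exI conjI allI)
  fix n show "band_projection (PP n)" by (rule PP_bp)
next
  show "order_convergent (\<lambda>n. f n - PP n (f n)) 0" unfolding order_convergent_iff
  proof (intro exI conjI allI)
    show "nulldec h" by (rule h_null)
    fix n show "rabs (f n - PP n (f n) - 0) \<le> h n"
      using rabs_of_nonneg[OF PP_rest(2)[of n]] PP_rest(1)[of n] by simp
  qed
next
  show "density_zero PP" unfolding density_zero_def op_order_convergent_def
  proof (intro exI[of _ Y] conjI allI impI)
    fix n
    show "order_bounded_op (Y n)" unfolding order_bounded_op_def
    proof (intro conjI allI Y_linear)
      fix a b show "\<exists>c d. \<forall>x. a \<le> x \<and> x \<le> b \<longrightarrow> c \<le> Y n x \<and> Y n x \<le> d"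
        by (rule exI[of _ "Y n a"], rule exI[of _ "Y n b"]) (auto intro: Y_mono)
    qed
    show "op_le (Y (Suc n)) (Y n)" unfolding op_le_def using Y_dec by blast
    show "op_le (\<lambda>x. 0) (Y n)" unfolding op_le_def using Y_pos by blast
    show "op_le (\<lambda>x. (1 / real n) *\<^sub>R (\<Sum>k<n. PP k x) - 0) (Y n)"
      unfolding op_le_def using density unfolding D_def by simp
    show "op_le (\<lambda>x. 0 - (1 / real n) *\<^sub>R (\<Sum>k<n. PP k x)) (Y n)"
      unfolding op_le_def
    proof (intro allI impI)
      fix x :: 'a assume x: "0 \<le> x"
      have "0 \<le> D n x" by (rule D_pos[OF x])
      then show "0 - (1 / real n) *\<^sub>R (\<Sum>k<n. PP k x) \<le> Y n x"
        using Y_pos[OF x, of n] unfolding D_def by (simp add: order_trans[of _ 0])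
    qed
  next
    fix S :: "'a \<Rightarrow> 'a" assume "order_bounded_op S \<and> (\<forall>n. op_le S (Y n))"
    then have S: "\<And>n x. 0 \<le> x \<Longrightarrow> S x \<le> Y n x" unfolding op_le_def by blast
    show "op_le S (\<lambda>x. 0)" unfolding op_le_def
    proof (intro allI impI)
      fix x :: 'a assume x: "0 \<le> x"
      show "S x \<le> 0" by (rule Y_inf[OF x]) (rule S[OF x])
    qed
  qed
qed

end

theorem theorem3p2:
  fixes e :: "'a::{ordered_real_vector,conditionally_complete_lattice}"
    and f :: "nat \<Rightarrow> 'a"
  assumes "weak_order_unit e"
    and "\<forall>n. 0 \<le> f n"
    and "\<exists>b. \<forall>n. f n \<le> b"
  shows "order_convergent (\<lambda>n. (1 / real n) *\<^sub>R (\<Sum>k<n. f k)) 0 \<longleftrightarrow>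
    (\<exists>P. (\<forall>n. band_projection (P n)) \<and> density_zero P
         \<and> order_convergent (\<lambda>n. f n - P n (f n)) 0)"
proof
  assume "order_convergent (\<lambda>n. (1 / real n) *\<^sub>R (\<Sum>k<n. f k)) 0"
  then obtain y where y: "nulldec y" and ay: "\<And>n. rabs ((1 / real n) *\<^sub>R (\<Sum>k<n. f k) - 0) \<le> y n"
    unfolding order_convergent_iff by blast
  have "\<And>n. (1 / real n) *\<^sub>R (\<Sum>k<n. f k) \<le> y n" using ay le_rabs by (metis diff_zero order_trans)
  then interpret F: fwd e f y using assms(1,2) y by unfold_locales auto
  show "\<exists>P. (\<forall>n. band_projection (P n)) \<and> density_zero P \<and> order_convergent (\<lambda>n. f n - P n (f n)) 0"
    by (rule F.fwd_main)
next
  assume "\<exists>P. (\<forall>n. band_projection (P n)) \<and> density_zero P \<and> order_convergent (\<lambda>n. f n - P n (f n)) 0"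
  then obtain P where "\<forall>n. band_projection (P n)" "density_zero P" "order_convergent (\<lambda>n. f n - P n (f n)) 0"
    by blast
  then show "order_convergent (\<lambda>n. (1 / real n) *\<^sub>R (\<Sum>k<n. f k)) 0"
    by (rule reverse_direction[OF assms(2,3)])
qed


end
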